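(* The sets of matrices $\{Q[\mathbf f]:\mathbf f\in\mathcal{LIN}_n^+\}\subset\{Q[\mathbf f]:\mathbf f\in\mathcal{LIN}_n\}$ are star-shaped about $0$ in the vector space of real anti-symmetric $n\times n$ matrices.
   Context: Let $\mathcal G$ be the group of strictly increasing continuous maps $f:[-1,1]\to[-1,1]$ with $f(\pm1)=\pm1$, $i$ the identity, $\mathcal G_0=\{f\in\mathcal G:\int_{-1}^1 f=0\}$, $f^e(t)=\tfrac12(f(t)+f(-t))$. For $f,g\in\mathcal G$, $Q(f,g)=\int_{-1}^1 f(g^{-1}(t))\,dt$. For $\mathbf f=(f_1,\dots,f_n)$, $Q[\mathbf f]$ is the $n\times n$ matrix with entries $Q[\mathbf f]_{ij}=Q(f_j,f_i)$ (it is anti-symmetric). $\mathcal{LIN}_n$ is the set of $\mathbf f\in\mathcal G_0^n$ with $\{i,f_1,\dots,f_n\}$ linearly independent; $\mathcal{LIN}_n^+$ the set of $\mathbf f\in\mathcal G_0^n$ with $\{f_1^e,\dots,f_n^e\}$ linearly independent. A subset $C$ of a vector space $V$ is star-shaped about $0$ if for every nonzero $v\in V$ the set $\{x\in\mathbb R:xv\in C\}$ is an interval containing $0$ in its interior. *)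

theory Defs
  imports "HOL-Analysis.Analysis"
begin

text \<open>Maps are represented as functions real => real; only their values on [-1,1] matter.\<close>

definition grpG :: "(real \<Rightarrow> real) set" where
  "grpG = {f. continuous_on {-1..1} f \<and> strict_mono_on {-1..1} f
              \<and> f ` {-1..1} \<subseteq> {-1..1} \<and> f (-1) = -1 \<and> f 1 = 1}"

definition grpG0 :: "(real \<Rightarrow> real) set" where
  "grpG0 = {f \<in> grpG. integral {-1..1} f = 0}"

definition even_part :: "(real \<Rightarrow> real) \<Rightarrow> real \<Rightarrow> real" where
  "even_part f = (\<lambda>t. (f t + f (-t)) / 2)"

definition Qf :: "(real \<Rightarrow> real) \<Rightarrow> (real \<Rightarrow> real) \<Rightarrow> real" where
  "Qf f g = integral {-1..1} (\<lambda>t. f (inv_into {-1..1} g t))"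

definition Qmat :: "('n::finite \<Rightarrow> real \<Rightarrow> real) \<Rightarrow> real^'n^'n" where
  "Qmat F = (\<chi> i j. Qf (F j) (F i))"

definition lin_indep_on :: "real set \<Rightarrow> ('i::finite \<Rightarrow> real \<Rightarrow> real) \<Rightarrow> bool" where
  "lin_indep_on S F \<longleftrightarrow>
     (\<forall>c. (\<forall>t\<in>S. (\<Sum>k\<in>UNIV. c k * F k t) = 0) \<longrightarrow> (\<forall>k. c k = 0))"

text \<open>LIN_n: f in G_0^n and the family (i, f_1, ..., f_n) linearly independent
  (index None stands for the identity i).\<close>
definition LIN :: "('n::finite \<Rightarrow> real \<Rightarrow> real) set" where
  "LIN = {F. (\<forall>j. F j \<in> grpG0) \<and>
             lin_indep_on {-1..1} (\<lambda>k::'n option. case k of None \<Rightarrow> (\<lambda>t. t) | Some j \<Rightarrow> F j)}"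

definition LINplus :: "('n::finite \<Rightarrow> real \<Rightarrow> real) set" where
  "LINplus = {F. (\<forall>j. F j \<in> grpG0) \<and> lin_indep_on {-1..1} (\<lambda>j. even_part (F j))}"

definition antisym_mats :: "(real^'n^'n) set" where
  "antisym_mats = {A. transpose A = - A}"

definition star_shaped0 :: "'v::real_vector set \<Rightarrow> 'v set \<Rightarrow> bool" where
  "star_shaped0 V C \<longleftrightarrow>
     (\<forall>v\<in>V. v \<noteq> 0 \<longrightarrow> is_interval {x::real. x *\<^sub>R v \<in> C} \<and> 0 \<in> interior {x::real. x *\<^sub>R v \<in> C})"

end

theory Submission
  imports Defs
begin

lemma G_cont: "f \<in> grpG \<Longrightarrow> continuous_on {-1..1} f"
  and G_mono: "f \<in> grpG \<Longrightarrow> strict_mono_on {-1..1} f"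
  and G_img: "f \<in> grpG \<Longrightarrow> f ` {-1..1} \<subseteq> {-1..1}"
  and G_m1: "f \<in> grpG \<Longrightarrow> f (-1) = -1"
  and G_p1: "f \<in> grpG \<Longrightarrow> f 1 = 1"
  by (auto simp: grpG_def)

lemma G_less: "f \<in> grpG \<Longrightarrow> x \<in> {-1..1} \<Longrightarrow> y \<in> {-1..1} \<Longrightarrow> x < y \<Longrightarrow> f x < f y"
  using G_mono by (metis strict_mono_onD)

lemma G_less_iff: "f \<in> grpG \<Longrightarrow> x \<in> {-1..1} \<Longrightarrow> y \<in> {-1..1} \<Longrightarrow> f x < f y \<longleftrightarrow> x < y"
  by (metis G_less linorder_neqE_linordered_idom order_less_asym)

lemma G_inj: "f \<in> grpG \<Longrightarrow> inj_on f {-1..1}"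
  using G_mono strict_mono_on_imp_inj_on by blast

lemma G_in: "f \<in> grpG \<Longrightarrow> x \<in> {-1..1} \<Longrightarrow> f x \<in> {-1..1}"
  using G_img by blast

lemma G_surj: assumes "f \<in> grpG" shows "f ` {-1..1} = {-1..1}"
proof
  show "f ` {-1..1} \<subseteq> {-1..1}" using G_img[OF assms] .
  show "{-1..1} \<subseteq> f ` {-1..1}"
  proof
    fix y :: real assume "y \<in> {-1..1}"
    then obtain x where "-1 \<le> x" "x \<le> 1" "f x = y"
      using IVT'[of f "-1" y 1] G_cont[OF assms] G_m1[OF assms] G_p1[OF assms] by auto
    then show "y \<in> f ` {-1..1}" by auto
  qed
qed

lemma G_inv_in: "f \<in> grpG \<Longrightarrow> t \<in> {-1..1} \<Longrightarrow> inv_into {-1..1} f t \<in> {-1..1}"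
  by (metis G_surj inv_into_into)

lemma G_f_inv: "f \<in> grpG \<Longrightarrow> t \<in> {-1..1} \<Longrightarrow> f (inv_into {-1..1} f t) = t"
  by (metis G_surj f_inv_into_f)

lemma G_inv_f: "f \<in> grpG \<Longrightarrow> t \<in> {-1..1} \<Longrightarrow> inv_into {-1..1} f (f t) = t"
  by (metis G_inj inv_into_f_f)

lemma G_inv_G: assumes "f \<in> grpG" shows "inv_into {-1..1} f \<in> grpG"
proof -
  let ?g = "inv_into {-1..1} f"
  have "continuous_on (f ` {-1..1}) ?g"
    by (rule continuous_on_inv[OF G_cont[OF assms]]) (auto simp: G_inv_f[OF assms])
  then have c: "continuous_on {-1..1} ?g" using G_surj[OF assms] by simp
  have m: "strict_mono_on {-1..1} ?g"
  proof (rule strict_mono_onI)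
    fix x y :: real assume xy: "x \<in> {-1..1}" "y \<in> {-1..1}" "x < y"
    show "?g x < ?g y"
    proof (rule ccontr)
      assume "\<not> ?g x < ?g y"
      then have "?g y < ?g x \<or> ?g y = ?g x" by auto
      then show False
      proof
        assume "?g y < ?g x"
        then have "f (?g y) < f (?g x)" using G_less[OF assms] G_inv_in[OF assms] xy by blast
        then show False using xy G_f_inv[OF assms] by auto
      next
        assume "?g y = ?g x"
        then have "f (?g y) = f (?g x)" by simp
        then show False using xy G_f_inv[OF assms] by auto
      qed
    qed
  qed
  have "?g (-1) = -1" using G_inv_f[OF assms, of "-1"] G_m1[OF assms] by simp
  moreover have "?g 1 = 1" using G_inv_f[OF assms, of "1"] G_p1[OF assms] by simp
  ultimately show ?thesis using c m G_inv_in[OF assms] unfolding grpG_def by auto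
qed

lemma G_comp: assumes "f \<in> grpG" "g \<in> grpG" shows "(\<lambda>t. f (g t)) \<in> grpG"
proof -
  have "continuous_on {-1..1} (\<lambda>t. f (g t))"
    using continuous_on_compose2[OF G_cont[OF assms(1)] G_cont[OF assms(2)] G_img[OF assms(2)]] .
  moreover have "strict_mono_on {-1..1} (\<lambda>t. f (g t))"
    by (rule strict_mono_onI) (meson G_in G_less assms)
  ultimately show ?thesis using assms unfolding grpG_def by auto
qed

lemma G_id: "(\<lambda>t. t) \<in> grpG"
  unfolding grpG_def by (auto intro!: continuous_intros strict_mono_onI)

lemma G_integrable: "f \<in> grpG \<Longrightarrow> f integrable_on {-1..1}"
  using G_cont integrable_continuous_real by blast

lemma id_int0: "((\<lambda>x::real. x) has_integral 0) {-1..1}"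
  using ident_has_integral[of "-1::real" 1] by simp

lemma Qf_self: assumes "f \<in> grpG" shows "Qf f f = 0"
proof -
  have "((\<lambda>t. f (inv_into {-1..1} f t)) has_integral 0) {-1..1}"
    using id_int0 by (subst has_integral_cong[where g="\<lambda>x. x"]) (auto simp: G_f_inv[OF assms])
  then show ?thesis unfolding Qf_def by (rule integral_unique)
qed

lemma inv_id: "t \<in> {-1..1} \<Longrightarrow> inv_into {-1..1} (\<lambda>t. t) t = (t::real)"
  by (rule inv_into_f_eq) auto

lemma Qf_id2: "Qf f (\<lambda>t. t) = integral {-1..1} f"
  unfolding Qf_def by (rule integral_cong) (simp add: inv_id)

lemma Qf_id_id: "Qf (\<lambda>t. t) (\<lambda>t. t) = 0"
  using Qf_self[OF G_id] .

section \<open>Localised copies\<close>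

definition clp :: "real \<Rightarrow> real" where "clp x = max (-1) (min 1 x)"

definition disp :: "real \<Rightarrow> real \<Rightarrow> (real \<Rightarrow> real) \<Rightarrow> real \<Rightarrow> real" where
  "disp m r f t = r * (f (clp ((t - m) / r)) - clp ((t - m) / r))"

definition emb :: "real \<Rightarrow> real \<Rightarrow> (real \<Rightarrow> real) \<Rightarrow> real \<Rightarrow> real" where
  "emb m r f t = t + disp m r f t"

definition okp :: "real \<Rightarrow> real \<Rightarrow> bool" where
  "okp m r \<longleftrightarrow> 0 < r \<and> -1 \<le> m - r \<and> m + r \<le> 1"

lemma clp_in: "clp x \<in> {-1..1}"
  by (auto simp: clp_def)

lemma clp_id: "x \<in> {-1..1} \<Longrightarrow> clp x = x"
  by (auto simp: clp_def)

lemma cont_clp: "continuous_on S clp"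
  unfolding clp_def by (intro continuous_intros)

lemma disp_lo: assumes "0 < r" "f (-1) = -1" "t \<le> m - r" shows "disp m r f t = 0"
proof -
  have "(t - m) / r \<le> -1" using assms by (simp add: divide_le_eq)
  then have "clp ((t - m) / r) = -1" by (auto simp: clp_def)
  then show ?thesis using assms by (simp add: disp_def)
qed

lemma disp_hi: assumes "0 < r" "f 1 = 1" "m + r \<le> t" shows "disp m r f t = 0"
proof -
  have "1 \<le> (t - m) / r" using assms by (simp add: le_divide_eq)
  then have "clp ((t - m) / r) = 1" by (auto simp: clp_def)
  then show ?thesis using assms by (simp add: disp_def)
qed

lemma disp_in: assumes "0 < r" "m - r \<le> t" "t \<le> m + r"
  shows "disp m r f t = r * f ((t - m) / r) - (t - m)"
proof -
  have "(t - m) / r \<in> {-1..1}" using assms by (auto simp: divide_le_eq le_divide_eq)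
  moreover have "r * ((t - m) / r) = t - m" using assms by simp
  ultimately show ?thesis using assms by (simp add: disp_def clp_id right_diff_distrib)
qed

lemma emb_in: assumes "0 < r" "m - r \<le> t" "t \<le> m + r"
  shows "emb m r f t = m + r * f ((t - m) / r)"
  using disp_in[OF assms] by (simp add: emb_def)

lemma emb_lo: "0 < r \<Longrightarrow> f (-1) = -1 \<Longrightarrow> t \<le> m - r \<Longrightarrow> emb m r f t = t"
  using disp_lo by (simp add: emb_def)

lemma emb_hi: "0 < r \<Longrightarrow> f 1 = 1 \<Longrightarrow> m + r \<le> t \<Longrightarrow> emb m r f t = t"
  using disp_hi by (simp add: emb_def)

lemma emb_in_range: assumes "0 < r" "m - r \<le> t" "t \<le> m + r" "f ((t - m) / r) \<in> {-1..1}"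
  shows "emb m r f t \<in> {m - r..m + r}"
proof -
  have "-r \<le> r * f ((t - m) / r)" "r * f ((t - m) / r) \<le> r"
    using assms mult_left_mono[of "f ((t - m) / r)" 1 r] mult_left_mono[of "-1" "f ((t - m) / r)" r]
    by auto
  then show ?thesis using emb_in[OF assms(1-3)] by auto
qed

lemma disp_has_integral:
  assumes f: "f \<in> grpG" and ok: "okp m r"
  shows "(disp m r f has_integral (r\<^sup>2 * integral {-1..1} f)) {-1..1}"
proof -
  from ok have r: "0 < r" unfolding okp_def by auto
  let ?I = "integral {-1..1} f"
  have fI: "(f has_integral ?I) (cbox (-1) 1)"
    using G_integrable[OF f] by (simp add: integrable_integral)
  have "((\<lambda>x. f ((1/r) *\<^sub>R x + (- m / r))) has_integral (?I /\<^sub>R (1/r) ^ DIM(real)))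
         (cbox ((-1 - (- m / r)) /\<^sub>R (1/r)) ((1 - (- m / r)) /\<^sub>R (1/r)))"
    by (rule has_integral_affinity'[OF fI]) (use r in simp)
  moreover have "cbox ((-1 - (- m / r)) /\<^sub>R (1/r)) ((1 - (- m / r)) /\<^sub>R (1/r)) = {m - r..m + r}"
    using r by (simp add: field_simps)
  moreover have "(\<lambda>x. f ((1/r) *\<^sub>R x + (- m / r))) = (\<lambda>x. f ((x - m) / r))"
    by (simp add: field_simps diff_divide_distrib)
  ultimately have h1: "((\<lambda>x. f ((x - m) / r)) has_integral (r * ?I)) {m - r..m + r}"
    using r by simp
  have h2: "((\<lambda>x. r * f ((x - m) / r)) has_integral (r * (r * ?I))) {m - r..m + r}"
    by (rule has_integral_mult_right[OF h1])
  have h3: "((\<lambda>x. x) has_integral (((m + r)\<^sup>2 - (m - r)\<^sup>2) / 2)) {m - r..m + r}"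
    by (rule ident_has_integral) (use r in simp)
  have h4: "((\<lambda>x. m) has_integral (2 * r * m)) {m - r..m + r}"
    using has_integral_const_real[of m "m - r" "m + r"] r by simp
  have "((\<lambda>x. r * f ((x - m) / r) - (x - m)) has_integral
          (r * (r * ?I) - ((((m + r)\<^sup>2 - (m - r)\<^sup>2) / 2) - 2 * r * m))) {m - r..m + r}"
    by (intro has_integral_diff h2 h3 h4)
  moreover have "(((m + r)\<^sup>2 - (m - r)\<^sup>2) / 2) - 2 * r * m = 0"
    using r by (simp add: power2_eq_square algebra_simps)
  ultimately have h5: "((\<lambda>x. r * f ((x - m) / r) - (x - m)) has_integral (r\<^sup>2 * ?I)) {m - r..m + r}"
    by (simp add: power2_eq_square mult.assoc)
  have h6: "(disp m r f has_integral (r\<^sup>2 * ?I)) {m - r..m + r}"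
    using h5 by (subst has_integral_cong[where g="\<lambda>x. r * f ((x - m) / r) - (x - m)"]) (auto simp: disp_in[OF r])
  show ?thesis
  proof (rule has_integral_on_superset[OF h6])
    fix x assume "x \<notin> {m - r..m + r}"
    then show "disp m r f x = 0"
      using disp_lo[of r f x m] disp_hi[of r f m x] r G_m1[OF f] G_p1[OF f] by (cases "x \<le> m - r") auto
  next
    show "{m - r..m + r} \<subseteq> {-1..1}" using ok by (auto simp: okp_def)
  qed
qed

lemma emb_has_integral:
  assumes f: "f \<in> grpG" and ok: "okp m r"
  shows "(emb m r f has_integral (r\<^sup>2 * integral {-1..1} f)) {-1..1}"
  using has_integral_add[OF id_int0 disp_has_integral[OF assms]] unfolding emb_def[abs_def] by simp

lemma disp_cong: assumes "\<And>x. x \<in> {-1..1} \<Longrightarrow> f x = g x" shows "disp m r f t = disp m r g t"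
proof -
  have "f (clp ((t - m) / r)) = g (clp ((t - m) / r))" using assms clp_in by blast
  then show ?thesis by (simp add: disp_def)
qed

lemma emb_cong: assumes "\<And>x. x \<in> {-1..1} \<Longrightarrow> f x = g x" shows "emb m r f t = emb m r g t"
  unfolding emb_def using disp_cong[OF assms] by simp

lemma emb_idlike: assumes "\<And>x. x \<in> {-1..1} \<Longrightarrow> f x = x" shows "emb m r f t = t"
proof -
  have "f (clp ((t - m) / r)) = clp ((t - m) / r)" using assms clp_in by blast
  then show ?thesis by (simp add: emb_def disp_def)
qed

lemma okpD: "okp m r \<Longrightarrow> 0 < r" "okp m r \<Longrightarrow> -1 \<le> m - r" "okp m r \<Longrightarrow> m + r \<le> 1"
  by (auto simp: okp_def)

lemma tau_in: fixes r m t :: real assumes "0 < r" "m - r \<le> t" "t \<le> m + r" shows "(t - m) / r \<in> {-1..1}"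
proof -
  have "-1 \<le> (t - m) / r" using pos_le_divide_eq[OF assms(1), of "-1" "t - m"] assms by simp
  moreover have "(t - m) / r \<le> 1" using pos_divide_le_eq[OF assms(1), of "t - m" 1] assms by simp
  ultimately show ?thesis by simp
qed

lemma emb_G: assumes f: "f \<in> grpG" and ok: "okp m r" shows "emb m r f \<in> grpG"
proof -
  have r: "0 < r" using okpD[OF ok] by simp
  have c1: "continuous_on {-1..1} (\<lambda>t. clp ((t - m) / r))"
    unfolding clp_def using r by (intro continuous_intros) auto
  have "continuous_on {-1..1} (\<lambda>t. f (clp ((t - m) / r)))"
    by (rule continuous_on_compose2[OF G_cont[OF f] c1]) (use clp_in in auto)
  then have "continuous_on {-1..1} (\<lambda>t. t + r * (f (clp ((t - m) / r)) - clp ((t - m) / r)))"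
    using continuous_on_add[OF continuous_on_id continuous_on_mult[OF continuous_on_const continuous_on_diff[OF _ c1]]]
    by blast
  then have cont: "continuous_on {-1..1} (emb m r f)"
    unfolding emb_def[abs_def] disp_def .
  have lo: "emb m r f t = t" if "t \<le> m - r" for t using emb_lo[of r f t m] r G_m1[OF f] that by simp
  have hi: "emb m r f t = t" if "m + r \<le> t" for t using emb_hi[of r f m t] r G_p1[OF f] that by simp
  have rng: "emb m r f t \<in> {m - r..m + r}" if "m - r \<le> t" "t \<le> m + r" for t
    using emb_in_range[OF r that] G_in[OF f tau_in[OF r that]] by blast
  have ea: "emb m r f (m - r) = m - r" using lo[of "m - r"] by simp
  have lt: "emb m r f t1 < emb m r f t2" if "m - r \<le> t1" "t1 < t2" "t2 \<le> m + r" for t1 t2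
  proof -
    have "(t1 - m) / r < (t2 - m) / r" using that r by (simp add: divide_strict_right_mono)
    moreover have "(t1 - m) / r \<in> {-1..1}" by (rule tau_in[OF r]) (use that in auto)
    moreover have "(t2 - m) / r \<in> {-1..1}" by (rule tau_in[OF r]) (use that in auto)
    ultimately have "f ((t1 - m) / r) < f ((t2 - m) / r)"
      using G_less[OF f] by blast
    moreover have "emb m r f t1 = m + r * f ((t1 - m) / r)" by (rule emb_in[OF r]) (use that in auto)
    moreover have "emb m r f t2 = m + r * f ((t2 - m) / r)" by (rule emb_in[OF r]) (use that in auto)
    ultimately show ?thesis using r by simp
  qed
  have mono: "strict_mono_on {-1..1} (emb m r f)"
  proof (rule strict_mono_onI)
    fix t1 t2 :: real assume "t1 \<in> {-1..1}" "t2 \<in> {-1..1}" and t12: "t1 < t2"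
    consider "t1 \<le> m - r" | "m - r < t1" "t1 \<le> m + r" | "m + r < t1" by linarith
    then show "emb m r f t1 < emb m r f t2"
    proof cases
      case 1
      note e1 = lo[OF 1]
      consider "t2 \<le> m - r" | "m - r < t2" "t2 \<le> m + r" | "m + r < t2" by linarith
      then show ?thesis
      proof cases
        case 1 then show ?thesis using e1 lo[OF 1] t12 by simp
      next
        case 2 then have "emb m r f (m - r) < emb m r f t2" using lt[of "m - r" t2] by simp
        then show ?thesis using e1 ea \<open>t1 \<le> m - r\<close> by linarith
      next
        case 3 then show ?thesis using e1 hi[of t2] t12 by simp
      qed
    next
      case 2
      show ?thesis
      proof (cases "t2 \<le> m + r")
        case True then show ?thesis using lt[of t1 t2] 2 t12 by simp
      next
        case False
        then have "emb m r f t1 \<le> m + r" using rng[of t1] 2 by simp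
        then show ?thesis using hi[of t2] False by simp
      qed
    next
      case 3 then show ?thesis using hi[of t1] hi[of t2] t12 by simp
    qed
  qed
  have img: "emb m r f t \<in> {-1..1}" if "t \<in> {-1..1}" for t
  proof -
    consider "t \<le> m - r" | "m - r \<le> t" "t \<le> m + r" | "m + r \<le> t" by linarith
    then show ?thesis
    proof cases
      case 1 then show ?thesis using lo[OF 1] that by simp
    next
      case 2 then show ?thesis using rng[OF 2] okpD[OF ok] by auto
    next
      case 3 then show ?thesis using hi[OF 3] that by simp
    qed
  qed
  have e1: "emb m r f (-1) = -1" using lo[of "-1"] okpD[OF ok] by simp
  have e2: "emb m r f 1 = 1" using hi[of "1"] okpD[OF ok] by simp
  show ?thesis unfolding grpG_def using cont mono img e1 e2 by auto
qed

lemma emb_comp: assumes f: "f \<in> grpG" and g: "g \<in> grpG" and r: "0 < r"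
  shows "emb m r f (emb m r g t) = emb m r (\<lambda>x. f (g x)) t"
proof -
  have fg: "(\<lambda>x. f (g x)) \<in> grpG" using G_comp[OF f g] .
  consider "t \<le> m - r" | "m - r \<le> t \<and> t \<le> m + r" | "m + r \<le> t" by linarith
  then show ?thesis
  proof cases
    case 1
    then show ?thesis using emb_lo[of r g t m] emb_lo[of r f t m] emb_lo[of r "\<lambda>x. f (g x)" t m] r G_m1[OF g] G_m1[OF f] G_m1[OF fg] by simp
  next
    case 3
    then show ?thesis using emb_hi[of r g m t] emb_hi[of r f m t] emb_hi[of r "\<lambda>x. f (g x)" m t] r G_p1[OF g] G_p1[OF f] G_p1[OF fg] by simp
  next
    case 2
    then have t: "m - r \<le> t" "t \<le> m + r" by auto
    have "emb m r g t \<in> {m - r..m + r}"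
      using emb_in_range[OF r t] G_in[OF g tau_in[OF r t]] by blast
    then have "emb m r f (emb m r g t) = m + r * f ((emb m r g t - m) / r)"
      using emb_in[OF r] by auto
    also have "(emb m r g t - m) / r = g ((t - m) / r)"
      using emb_in[OF r t] r by simp
    finally show ?thesis using emb_in[OF r t] by simp
  qed
qed

lemma emb_inv: assumes f: "f \<in> grpG" and ok: "okp m r" and t: "t \<in> {-1..1}"
  shows "inv_into {-1..1} (emb m r f) t = emb m r (inv_into {-1..1} f) t"
proof (rule inv_into_f_eq[OF G_inj[OF emb_G[OF f ok]]])
  show "emb m r (inv_into {-1..1} f) t \<in> {-1..1}"
    using G_in[OF emb_G[OF G_inv_G[OF f] ok] t] .
  have "emb m r f (emb m r (inv_into {-1..1} f) t) = emb m r (\<lambda>x. f (inv_into {-1..1} f x)) t"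
    by (rule emb_comp[OF f G_inv_G[OF f] okpD(1)[OF ok]])
  also have "\<dots> = t" by (rule emb_idlike) (simp add: G_f_inv[OF f])
  finally show "emb m r f (emb m r (inv_into {-1..1} f) t) = t" .
qed

lemma Q_emb: assumes f: "f \<in> grpG" and g: "g \<in> grpG" and ok: "okp m r"
  shows "Qf (emb m r f) (emb m r g) = r\<^sup>2 * Qf f g"
proof -
  let ?h = "\<lambda>x. f (inv_into {-1..1} g x)"
  have h: "?h \<in> grpG" using G_comp[OF f G_inv_G[OF g]] .
  have "Qf (emb m r f) (emb m r g) = integral {-1..1} (emb m r ?h)"
    unfolding Qf_def
  proof (rule integral_cong)
    fix t :: real assume t: "t \<in> {-1..1}"
    have "inv_into {-1..1} (emb m r g) t = emb m r (inv_into {-1..1} g) t"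
      by (rule emb_inv[OF g ok t])
    then show "emb m r f (inv_into {-1..1} (emb m r g) t) = emb m r ?h t"
      using emb_comp[OF f G_inv_G[OF g] okpD(1)[OF ok], where m=m and t=t] by simp
  qed
  also have "\<dots> = r\<^sup>2 * integral {-1..1} ?h"
    using emb_has_integral[OF h ok] by (rule integral_unique)
  finally show ?thesis unfolding Qf_def .
qed

lemma emb_G0: assumes f: "f \<in> grpG0" and ok: "okp m r" shows "emb m r f \<in> grpG0"
proof -
  have "f \<in> grpG" "integral {-1..1} f = 0" using f by (auto simp: grpG0_def)
  then have "(emb m r f has_integral 0) {-1..1}"
    using emb_has_integral[OF _ ok, of f] by simp
  then have "integral {-1..1} (emb m r f) = 0" by (rule integral_unique)
  then show ?thesis using emb_G[OF _ ok] \<open>f \<in> grpG\<close> by (simp add: grpG0_def)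
qed

lemma disp_idlike: assumes "\<And>x. x \<in> {-1..1} \<Longrightarrow> f x = x" shows "disp m r f t = 0"
  using emb_idlike[OF assms, of m r t] by (simp add: emb_def)

lemma disp_cont: assumes f: "f \<in> grpG" and ok: "okp m r" shows "continuous_on {-1..1} (disp m r f)"
proof -
  have "continuous_on {-1..1} (\<lambda>t. emb m r f t - t)"
    by (rule continuous_on_diff[OF G_cont[OF emb_G[OF f ok]] continuous_on_id])
  then show ?thesis by (simp add: emb_def)
qed

section \<open>Concatenation\<close>

definition conc :: "(real \<Rightarrow> real) \<Rightarrow> (real \<Rightarrow> real) \<Rightarrow> real \<Rightarrow> real" where
  "conc f g t = t + disp (-1/2) (1/2) f t + disp (1/2) (1/2) g t"

lemma okL: "okp (-1/2) (1/2)" and okR: "okp (1/2) (1/2)"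
  by (auto simp: okp_def)

lemma conc_L: assumes "g \<in> grpG" "t \<le> 0" shows "conc f g t = emb (-1/2) (1/2) f t"
  using disp_lo[of "1/2" g t "1/2"] G_m1[OF assms(1)] assms(2) by (simp add: conc_def emb_def)

lemma conc_R: assumes "f \<in> grpG" "0 \<le> t" shows "conc f g t = emb (1/2) (1/2) g t"
  using disp_hi[of "1/2" f "-1/2" t] G_p1[OF assms(1)] assms(2) by (simp add: conc_def emb_def)

lemma embL_rng: assumes "f \<in> grpG" "-1 \<le> t" "t \<le> 0" shows "emb (-1/2) (1/2) f t \<in> {-1..0}"
proof -
  have "emb (-1/2) (1/2) f t \<in> {-1/2 - 1/2..-1/2 + 1/2}"
    by (rule emb_in_range) (use assms G_in[OF assms(1) tau_in[of "1/2" "-1/2" t]] in auto)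
  then show ?thesis by simp
qed

lemma embR_rng: assumes "f \<in> grpG" "0 \<le> t" "t \<le> 1" shows "emb (1/2) (1/2) f t \<in> {0..1}"
proof -
  have "emb (1/2) (1/2) f t \<in> {1/2 - 1/2..1/2 + 1/2}"
    by (rule emb_in_range) (use assms G_in[OF assms(1) tau_in[of "1/2" "1/2" t]] in auto)
  then show ?thesis by simp
qed

lemma conc_G: assumes f: "f \<in> grpG" and g: "g \<in> grpG" shows "conc f g \<in> grpG"
proof -
  let ?L = "emb (-1/2) (1/2) f" and ?R = "emb (1/2) (1/2) g"
  have L: "?L \<in> grpG" by (rule emb_G[OF f okL])
  have R: "?R \<in> grpG" by (rule emb_G[OF g okR])
  have "continuous_on {-1..1} (\<lambda>t. t + disp (-1/2) (1/2) f t + disp (1/2) (1/2) g t)"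
    by (rule continuous_on_add[OF continuous_on_add[OF continuous_on_id disp_cont[OF f okL]] disp_cont[OF g okR]])
  then have cont: "continuous_on {-1..1} (conc f g)" unfolding conc_def[abs_def] .
  have L0: "?L 0 = 0" using emb_hi[of "1/2" f "-1/2" 0] G_p1[OF f] by simp
  have mono: "strict_mono_on {-1..1} (conc f g)"
  proof (rule strict_mono_onI)
    fix t1 t2 :: real assume t1: "t1 \<in> {-1..1}" and t2: "t2 \<in> {-1..1}" and t12: "t1 < t2"
    show "conc f g t1 < conc f g t2"
    proof (cases "t2 \<le> 0")
      case True
      then show ?thesis using conc_L[OF g] G_less[OF L t1 t2 t12] t12 by simp
    next
      case False
      show ?thesis
      proof (cases "0 \<le> t1")
        case True
        then show ?thesis using conc_R[OF f] G_less[OF R t1 t2 t12] t12 by simp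
      next
        case False
        have "?L t1 < ?L 0" by (rule G_less[OF L t1]) (use False in auto)
        moreover have "?R t2 \<in> {0..1}" by (rule embR_rng[OF g]) (use \<open>\<not> t2 \<le> 0\<close> t2 in auto)
        ultimately show ?thesis using conc_L[OF g, of t1] conc_R[OF f, of t2] False \<open>\<not> t2 \<le> 0\<close> L0 by simp
      qed
    qed
  qed
  have img: "conc f g t \<in> {-1..1}" if "t \<in> {-1..1}" for t
    using conc_L[OF g, of t] conc_R[OF f, of t] G_in[OF L that] G_in[OF R that] by (cases "t \<le> 0") auto
  have "conc f g (-1) = -1" using conc_L[OF g, of "-1"] G_m1[OF L] by simp
  moreover have "conc f g 1 = 1" using conc_R[OF f, of "1"] G_p1[OF R] by simp
  ultimately show ?thesis using cont mono img unfolding grpG_def by auto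
qed

lemma conc_comp:
  assumes f1: "f1 \<in> grpG" and g1: "g1 \<in> grpG" and f2: "f2 \<in> grpG" and g2: "g2 \<in> grpG"
    and t: "t \<in> {-1..1}"
  shows "conc f1 g1 (conc f2 g2 t) = conc (\<lambda>x. f1 (f2 x)) (\<lambda>x. g1 (g2 x)) t"
proof (cases "t \<le> 0")
  case True
  have r: "emb (-1/2) (1/2) f2 t \<in> {-1..0}" by (rule embL_rng[OF f2]) (use t True in auto)
  have "conc f1 g1 (conc f2 g2 t) = emb (-1/2) (1/2) f1 (emb (-1/2) (1/2) f2 t)"
    using conc_L[OF g2 True] conc_L[OF g1, of "emb (-1/2) (1/2) f2 t"] r by simp
  also have "\<dots> = emb (-1/2) (1/2) (\<lambda>x. f1 (f2 x)) t"
    by (rule emb_comp[OF f1 f2]) simp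
  also have "\<dots> = conc (\<lambda>x. f1 (f2 x)) (\<lambda>x. g1 (g2 x)) t"
    using conc_L[OF G_comp[OF g1 g2] True] by simp
  finally show ?thesis .
next
  case False
  have r: "emb (1/2) (1/2) g2 t \<in> {0..1}" by (rule embR_rng[OF g2]) (use t False in auto)
  have "conc f1 g1 (conc f2 g2 t) = emb (1/2) (1/2) g1 (emb (1/2) (1/2) g2 t)"
    using conc_R[OF f2, of t] conc_R[OF f1, of "emb (1/2) (1/2) g2 t"] r False by simp
  also have "\<dots> = emb (1/2) (1/2) (\<lambda>x. g1 (g2 x)) t"
    by (rule emb_comp[OF g1 g2]) simp
  also have "\<dots> = conc (\<lambda>x. f1 (f2 x)) (\<lambda>x. g1 (g2 x)) t"
    using conc_R[OF G_comp[OF f1 f2], of t] False by simp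
  finally show ?thesis .
qed

lemma conc_idlike: assumes "\<And>x. x \<in> {-1..1} \<Longrightarrow> f x = x" "\<And>x. x \<in> {-1..1} \<Longrightarrow> g x = x"
  shows "conc f g t = t"
  using disp_idlike[OF assms(1)] disp_idlike[OF assms(2)] by (simp add: conc_def)

lemma conc_inv: assumes f: "f \<in> grpG" and g: "g \<in> grpG" and t: "t \<in> {-1..1}"
  shows "inv_into {-1..1} (conc f g) t = conc (inv_into {-1..1} f) (inv_into {-1..1} g) t"
proof (rule inv_into_f_eq[OF G_inj[OF conc_G[OF f g]]])
  show "conc (inv_into {-1..1} f) (inv_into {-1..1} g) t \<in> {-1..1}"
    using G_in[OF conc_G[OF G_inv_G[OF f] G_inv_G[OF g]] t] .
  have "conc f g (conc (inv_into {-1..1} f) (inv_into {-1..1} g) t)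
      = conc (\<lambda>x. f (inv_into {-1..1} f x)) (\<lambda>x. g (inv_into {-1..1} g x)) t"
    by (rule conc_comp[OF f g G_inv_G[OF f] G_inv_G[OF g] t])
  also have "\<dots> = t" by (rule conc_idlike) (simp_all add: G_f_inv[OF f] G_f_inv[OF g])
  finally show "conc f g (conc (inv_into {-1..1} f) (inv_into {-1..1} g) t) = t" .
qed

lemma conc_has_integral: assumes f: "f \<in> grpG" and g: "g \<in> grpG"
  shows "(conc f g has_integral (1/4 * integral {-1..1} f + 1/4 * integral {-1..1} g)) {-1..1}"
proof -
  have "((\<lambda>t. t + disp (-1/2) (1/2) f t + disp (1/2) (1/2) g t) has_integral
        (0 + (1/2)\<^sup>2 * integral {-1..1} f + (1/2)\<^sup>2 * integral {-1..1} g)) {-1..1}"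
    by (intro has_integral_add id_int0 disp_has_integral f g okL okR)
  then show ?thesis unfolding conc_def[abs_def] by (simp add: power2_eq_square)
qed

lemma Q_conc: assumes f1: "f1 \<in> grpG" and g1: "g1 \<in> grpG" and f2: "f2 \<in> grpG" and g2: "g2 \<in> grpG"
  shows "Qf (conc f1 g1) (conc f2 g2) = 1/4 * Qf f1 f2 + 1/4 * Qf g1 g2"
proof -
  let ?h = "\<lambda>x. f1 (inv_into {-1..1} f2 x)" and ?k = "\<lambda>x. g1 (inv_into {-1..1} g2 x)"
  have h: "?h \<in> grpG" using G_comp[OF f1 G_inv_G[OF f2]] .
  have k: "?k \<in> grpG" using G_comp[OF g1 G_inv_G[OF g2]] .
  have "Qf (conc f1 g1) (conc f2 g2) = integral {-1..1} (conc ?h ?k)"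
    unfolding Qf_def
  proof (rule integral_cong)
    fix t :: real assume t: "t \<in> {-1..1}"
    have "inv_into {-1..1} (conc f2 g2) t = conc (inv_into {-1..1} f2) (inv_into {-1..1} g2) t"
      by (rule conc_inv[OF f2 g2 t])
    then show "conc f1 g1 (inv_into {-1..1} (conc f2 g2) t) = conc ?h ?k t"
      using conc_comp[OF f1 g1 G_inv_G[OF f2] G_inv_G[OF g2] t] by simp
  qed
  also have "\<dots> = 1/4 * integral {-1..1} ?h + 1/4 * integral {-1..1} ?k"
    using conc_has_integral[OF h k] by (rule integral_unique)
  finally show ?thesis unfolding Qf_def .
qed

lemma conc_G0: assumes f: "f \<in> grpG0" and g: "g \<in> grpG0" shows "conc f g \<in> grpG0"
proof -
  have fg: "f \<in> grpG" "g \<in> grpG" "integral {-1..1} f = 0" "integral {-1..1} g = 0"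
    using f g by (auto simp: grpG0_def)
  then have "(conc f g has_integral 0) {-1..1}"
    using conc_has_integral[OF fg(1,2)] by simp
  then have "integral {-1..1} (conc f g) = 0" by (rule integral_unique)
  then show ?thesis using conc_G[OF fg(1,2)] by (simp add: grpG0_def)
qed

section \<open>Reflection\<close>

definition rf :: "(real \<Rightarrow> real) \<Rightarrow> real \<Rightarrow> real" where
  "rf f t = - f (- t)"

lemma rf_G: assumes f: "f \<in> grpG" shows "rf f \<in> grpG"
proof -
  have "continuous_on {-1..1} (\<lambda>t. f (- t))"
    by (rule continuous_on_compose2[OF G_cont[OF f]]) (auto intro: continuous_intros)
  then have cont: "continuous_on {-1..1} (rf f)"
    unfolding rf_def[abs_def] by (rule continuous_on_minus)
  have mono: "strict_mono_on {-1..1} (rf f)"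
  proof (rule strict_mono_onI)
    fix x y :: real assume "x \<in> {-1..1}" "y \<in> {-1..1}" "x < y"
    then have "f (-y) < f (-x)" using G_less[OF f, of "-y" "-x"] by auto
    then show "rf f x < rf f y" by (simp add: rf_def)
  qed
  have img: "rf f t \<in> {-1..1}" if "t \<in> {-1..1}" for t
    using G_in[OF f, of "-t"] that by (auto simp: rf_def)
  show ?thesis using cont mono img G_m1[OF f] G_p1[OF f] unfolding grpG_def by (auto simp: rf_def)
qed

lemma rf_comp: "rf f (rf g t) = rf (\<lambda>x. f (g x)) t"
  by (simp add: rf_def)

lemma rf_inv: assumes f: "f \<in> grpG" and t: "t \<in> {-1..1}"
  shows "inv_into {-1..1} (rf f) t = rf (inv_into {-1..1} f) t"
proof (rule inv_into_f_eq[OF G_inj[OF rf_G[OF f]]])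
  show "rf (inv_into {-1..1} f) t \<in> {-1..1}" using G_in[OF rf_G[OF G_inv_G[OF f]] t] .
  have "-t \<in> {-1..1}" using t by auto
  then show "rf f (rf (inv_into {-1..1} f) t) = t" by (simp add: rf_def G_f_inv[OF f])
qed

lemma rf_has_integral: assumes "(h has_integral I) {-1..1}" shows "(rf h has_integral (- I)) {-1..1}"
proof -
  have "((\<lambda>x. h (- x)) has_integral I) {- 1..- (- 1)}"
    using assms by (subst has_integral_reflect_real) simp
  then have "((\<lambda>x. h (- x)) has_integral I) {-1..1}" by simp
  from has_integral_neg[OF this] show ?thesis unfolding rf_def[abs_def] .
qed

lemma Q_rf: assumes f: "f \<in> grpG" and g: "g \<in> grpG"
  shows "Qf (rf f) (rf g) = - Qf f g"
proof -
  let ?h = "\<lambda>x. f (inv_into {-1..1} g x)"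
  have h: "?h \<in> grpG" using G_comp[OF f G_inv_G[OF g]] .
  have "Qf (rf f) (rf g) = integral {-1..1} (rf ?h)"
    unfolding Qf_def by (rule integral_cong) (simp add: rf_inv[OF g] rf_comp)
  also have "\<dots> = - integral {-1..1} ?h"
    by (rule integral_unique[OF rf_has_integral]) (use G_integrable[OF h] in \<open>simp add: integrable_integral\<close>)
  finally show ?thesis unfolding Qf_def .
qed

lemma rf_G0: assumes f: "f \<in> grpG0" shows "rf f \<in> grpG0"
proof -
  have fg: "f \<in> grpG" "integral {-1..1} f = 0" using f by (auto simp: grpG0_def)
  have "(rf f has_integral (- integral {-1..1} f)) {-1..1}"
    by (rule rf_has_integral) (use G_integrable[OF fg(1)] in \<open>simp add: integrable_integral\<close>)
  then have "integral {-1..1} (rf f) = 0" using fg(2) by (simp add: integral_unique)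
  then show ?thesis using rf_G[OF fg(1)] by (simp add: grpG0_def)
qed

lemma G0_G: "f \<in> grpG0 \<Longrightarrow> f \<in> grpG"
  by (simp add: grpG0_def)

lemma Qmat_emb: fixes F :: "'n::finite \<Rightarrow> real \<Rightarrow> real"
  assumes "\<And>k. F k \<in> grpG" "okp m r"
  shows "Qmat (\<lambda>k. emb m r (F k)) = r\<^sup>2 *\<^sub>R Qmat F"
  unfolding Qmat_def by (simp add: vec_eq_iff Q_emb assms)

lemma Qmat_conc: fixes F H :: "'n::finite \<Rightarrow> real \<Rightarrow> real"
  assumes "\<And>k. F k \<in> grpG" "\<And>k. H k \<in> grpG"
  shows "Qmat (\<lambda>k. conc (F k) (H k)) = (1/4) *\<^sub>R (Qmat F + Qmat H)"
  unfolding Qmat_def by (simp add: vec_eq_iff Q_conc assms algebra_simps)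

lemma Qmat_rf: fixes F :: "'n::finite \<Rightarrow> real \<Rightarrow> real"
  assumes "\<And>k. F k \<in> grpG"
  shows "Qmat (\<lambda>k. rf (F k)) = - Qmat F"
  unfolding Qmat_def by (simp add: vec_eq_iff Q_rf assms)

definition linP :: "('n::finite \<Rightarrow> real \<Rightarrow> real) \<Rightarrow> bool" where
  "linP F \<longleftrightarrow> (\<forall>c0 c. (\<forall>t\<in>{-1..1}. c0 * t + (\<Sum>j\<in>UNIV. c j * F j t) = 0) \<longrightarrow> c0 = 0 \<and> (\<forall>j. c j = 0))"

lemma sum_option: "(\<Sum>k\<in>(UNIV::'n::finite option set). g k) = g None + (\<Sum>j\<in>UNIV. g (Some j))"
proof -
  have "(\<Sum>k\<in>(UNIV::'n option set). g k) = (\<Sum>k\<in>insert None (range Some). g k)"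
    by (simp add: UNIV_option_conv)
  also have "\<dots> = g None + (\<Sum>k\<in>range Some. g k)"
    by (rule sum.insert) auto
  also have "(\<Sum>k\<in>range Some. g k) = (\<Sum>j\<in>UNIV. g (Some j))"
    by (subst sum.reindex) (auto simp: inj_on_def)
  finally show ?thesis .
qed

lemma lin_opt_iff: fixes F :: "'n::finite \<Rightarrow> real \<Rightarrow> real"
  shows "lin_indep_on {-1..1} (\<lambda>k::'n option. case k of None \<Rightarrow> (\<lambda>t. t) | Some j \<Rightarrow> F j) \<longleftrightarrow> linP F"
proof
  assume L: "lin_indep_on {-1..1} (\<lambda>k::'n option. case k of None \<Rightarrow> (\<lambda>t. t) | Some j \<Rightarrow> F j)"
  show "linP F" unfolding linP_def
  proof (intro allI impI)
    fix c0 and c :: "'n \<Rightarrow> real"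
    assume H: "\<forall>t\<in>{-1..1}. c0 * t + (\<Sum>j\<in>UNIV. c j * F j t) = 0"
    let ?c = "\<lambda>k. case k of None \<Rightarrow> c0 | Some j \<Rightarrow> c j"
    have "\<forall>t\<in>{-1..1}. (\<Sum>k\<in>UNIV. ?c k * (case k of None \<Rightarrow> (\<lambda>t. t) | Some j \<Rightarrow> F j) t) = 0"
      using H by (simp add: sum_option)
    then have "\<forall>k. ?c k = 0" using L unfolding lin_indep_on_def by blast
    then show "c0 = 0 \<and> (\<forall>j. c j = 0)" by (metis option.simps(4) option.simps(5))
  qed
next
  assume L: "linP F"
  show "lin_indep_on {-1..1} (\<lambda>k::'n option. case k of None \<Rightarrow> (\<lambda>t. t) | Some j \<Rightarrow> F j)"
    unfolding lin_indep_on_def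
  proof (intro allI impI)
    fix c :: "'n option \<Rightarrow> real" and k
    assume H: "\<forall>t\<in>{-1..1}. (\<Sum>k\<in>UNIV. c k * (case k of None \<Rightarrow> (\<lambda>t. t) | Some j \<Rightarrow> F j) t) = 0"
    then have "\<forall>t\<in>{-1..1}. c None * t + (\<Sum>j\<in>UNIV. c (Some j) * F j t) = 0"
      by (simp add: sum_option)
    moreover have "(\<forall>t\<in>{-1..1}. c None * t + (\<Sum>j\<in>UNIV. c (Some j) * F j t) = 0) \<longrightarrow>
        c None = 0 \<and> (\<forall>j. c (Some j) = 0)"
      using spec[OF spec[OF L[unfolded linP_def], of "c None"], of "\<lambda>j. c (Some j)"] by simp
    ultimately have "c None = 0 \<and> (\<forall>j. c (Some j) = 0)" by blast
    then show "c k = 0" by (cases k) auto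
  qed
qed

lemma LIN_iff: "F \<in> LIN \<longleftrightarrow> (\<forall>j. F j \<in> grpG0) \<and> linP F"
  unfolding LIN_def using lin_opt_iff by blast

definition linE :: "('n::finite \<Rightarrow> real \<Rightarrow> real) \<Rightarrow> bool" where
  "linE F \<longleftrightarrow> (\<forall>c. (\<forall>t\<in>{-1..1}. (\<Sum>j\<in>UNIV. c j * even_part (F j) t) = 0) \<longrightarrow> (\<forall>j. c j = 0))"

lemma LINplus_iff: "F \<in> LINplus \<longleftrightarrow> (\<forall>j. F j \<in> grpG0) \<and> linE F"
  unfolding LINplus_def linE_def lin_indep_on_def by blast

lemma linE_linP: fixes F :: "'n::finite \<Rightarrow> real \<Rightarrow> real"
  assumes E: "linE F" shows "linP F"
  unfolding linP_def
proof (intro allI impI)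
  fix c0 and c :: "'n \<Rightarrow> real"
  assume H: "\<forall>t\<in>{-1..1}. c0 * t + (\<Sum>j\<in>UNIV. c j * F j t) = 0"
  have "\<forall>t\<in>{-1..1}. (\<Sum>j\<in>UNIV. c j * even_part (F j) t) = 0"
  proof
    fix t :: real assume t: "t \<in> {-1..1}"
    then have mt: "-t \<in> {-1..1}" by auto
    have h1: "c0 * t + (\<Sum>j\<in>UNIV. c j * F j t) = 0" using H t by blast
    have h2: "c0 * (-t) + (\<Sum>j\<in>UNIV. c j * F j (-t)) = 0" using H mt by blast
    have "c0 * t + (\<Sum>j\<in>UNIV. c j * F j t) + (c0 * (-t) + (\<Sum>j\<in>UNIV. c j * F j (-t))) = 0"
      using h1 h2 by simp
    then have "(\<Sum>j\<in>UNIV. c j * F j t + c j * F j (-t)) = 0"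
      by (simp add: sum.distrib algebra_simps)
    moreover have "(\<Sum>j\<in>UNIV. c j * even_part (F j) t) = (\<Sum>j\<in>UNIV. (c j * F j t + c j * F j (-t)) / 2)"
      by (rule sum.cong) (auto simp: even_part_def field_simps)
    moreover have "(\<Sum>j\<in>UNIV. (c j * F j t + c j * F j (-t)) / 2) = (\<Sum>j\<in>UNIV. c j * F j t + c j * F j (-t)) / 2"
      by (rule sum_divide_distrib[symmetric])
    ultimately show "(\<Sum>j\<in>UNIV. c j * even_part (F j) t) = 0" by linarith
  qed
  then have c: "\<forall>j. c j = 0" using E unfolding linE_def by blast
  have one: "(1::real) \<in> {-1..1}" by simp
  have "c0 * 1 + (\<Sum>j\<in>UNIV. c j * F j 1) = 0" using bspec[OF H one] .
  then have "c0 * 1 = 0" using c by simp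
  then show "c0 = 0 \<and> (\<forall>j. c j = 0)" using c by simp
qed

lemma LINplus_sub: "LINplus \<subseteq> LIN"
  using linE_linP LIN_iff LINplus_iff by blast

lemma linP_transfer: fixes F G :: "'n::finite \<Rightarrow> real \<Rightarrow> real"
  assumes "linP F"
    and "\<And>c0 c s. \<forall>t\<in>{-1..1}. c0 * t + (\<Sum>j\<in>UNIV. c j * G j t) = 0 \<Longrightarrow> s \<in> {-1..1} \<Longrightarrow>
          c0 * s + (\<Sum>j\<in>UNIV. c j * F j s) = 0"
  shows "linP G"
  unfolding linP_def
proof (intro allI impI)
  fix c0 and c :: "'n \<Rightarrow> real"
  assume "\<forall>t\<in>{-1..1}. c0 * t + (\<Sum>j\<in>UNIV. c j * G j t) = 0"
  then have "\<forall>s\<in>{-1..1}. c0 * s + (\<Sum>j\<in>UNIV. c j * F j s) = 0" using assms(2) by blast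
  then show "c0 = 0 \<and> (\<forall>j. c j = 0)" using assms(1) unfolding linP_def by blast
qed

lemma linE_transfer: fixes F G :: "'n::finite \<Rightarrow> real \<Rightarrow> real"
  assumes "linE F"
    and "\<And>c s. \<forall>t\<in>{-1..1}. (\<Sum>j\<in>UNIV. c j * even_part (G j) t) = 0 \<Longrightarrow> s \<in> {-1..1} \<Longrightarrow>
          (\<Sum>j\<in>UNIV. c j * even_part (F j) s) = 0"
  shows "linE G"
  unfolding linE_def
proof (rule allI, rule impI)
  fix c :: "'n \<Rightarrow> real"
  assume "\<forall>t\<in>{-1..1}. (\<Sum>j\<in>UNIV. c j * even_part (G j) t) = 0"
  then have "\<forall>s\<in>{-1..1}. (\<Sum>j\<in>UNIV. c j * even_part (F j) s) = 0" using assms(2) by blast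
  then show "\<forall>j. c j = 0" using assms(1) unfolding linE_def by blast
qed

lemma emb0_scale: assumes r: "0 < r" "r \<le> 1" and s: "s \<in> {-1..1}"
  shows "r * s \<in> {-1..1}" "emb 0 r f (r * s) = r * f s"
proof -
  have a: "-r \<le> r * s" "r * s \<le> r" using mult_left_mono[of "-1" s r] mult_left_mono[of s 1 r] r s by auto
  then have "-1 \<le> r * s" "r * s \<le> 1" using r by linarith+
  then show "r * s \<in> {-1..1}" by simp
  have "emb 0 r f (r * s) = 0 + r * f ((r * s - 0) / r)" by (rule emb_in) (use a r in auto)
  then show "emb 0 r f (r * s) = r * f s" using r by simp
qed

lemma linP_emb0: fixes F :: "'n::finite \<Rightarrow> real \<Rightarrow> real"
  assumes L: "linP F" and r: "0 < r" "r \<le> 1"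
  shows "linP (\<lambda>k. emb 0 r (F k))"
proof (rule linP_transfer[OF L])
  fix c0 and c :: "'n \<Rightarrow> real" and s :: real
  assume H: "\<forall>t\<in>{-1..1}. c0 * t + (\<Sum>j\<in>UNIV. c j * emb 0 r (F j) t) = 0" and s: "s \<in> {-1..1}"
  have "c0 * (r * s) + (\<Sum>j\<in>UNIV. c j * emb 0 r (F j) (r * s)) = 0"
    using bspec[OF H emb0_scale(1)[OF r s]] .
  moreover have "(\<Sum>j\<in>UNIV. c j * emb 0 r (F j) (r * s)) = r * (\<Sum>j\<in>UNIV. c j * F j s)"
    by (simp add: emb0_scale(2)[OF r s] sum_distrib_left mult.left_commute)
  ultimately have "r * (c0 * s + (\<Sum>j\<in>UNIV. c j * F j s)) = 0" by (simp add: algebra_simps)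
  then show "c0 * s + (\<Sum>j\<in>UNIV. c j * F j s) = 0" using r by simp
qed

lemma linE_emb0: fixes F :: "'n::finite \<Rightarrow> real \<Rightarrow> real"
  assumes L: "linE F" and r: "0 < r" "r \<le> 1"
  shows "linE (\<lambda>k. emb 0 r (F k))"
proof (rule linE_transfer[OF L])
  fix c :: "'n \<Rightarrow> real" and s :: real
  assume H: "\<forall>t\<in>{-1..1}. (\<Sum>j\<in>UNIV. c j * even_part (emb 0 r (F j)) t) = 0" and s: "s \<in> {-1..1}"
  have ms: "-s \<in> {-1..1}" using s by auto
  have e: "even_part (emb 0 r (F j)) (r * s) = r * even_part (F j) s" for j
    using emb0_scale(2)[OF r s] emb0_scale(2)[OF r ms] by (simp add: even_part_def algebra_simps)
  have "(\<Sum>j\<in>UNIV. c j * even_part (emb 0 r (F j)) (r * s)) = 0"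
    using bspec[OF H emb0_scale(1)[OF r s]] .
  moreover have "(\<Sum>j\<in>UNIV. c j * even_part (emb 0 r (F j)) (r * s)) = r * (\<Sum>j\<in>UNIV. c j * even_part (F j) s)"
    by (simp add: e sum_distrib_left mult.left_commute)
  ultimately show "(\<Sum>j\<in>UNIV. c j * even_part (F j) s) = 0" using r by simp
qed

lemma conc_half: assumes f: "f \<in> grpG" and s: "s \<in> {-1..1}"
  shows "(s + 1) / 2 \<in> {-1..1}" "conc f g ((s + 1) / 2) = 1/2 + 1/2 * g s"
proof -
  show "(s + 1) / 2 \<in> {-1..1}" using s by auto
  have "conc f g ((s + 1) / 2) = emb (1/2) (1/2) g ((s + 1) / 2)"
    by (rule conc_R[OF f]) (use s in auto)
  also have "\<dots> = 1/2 + 1/2 * g (((s + 1) / 2 - 1/2) / (1/2))"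
    by (rule emb_in) (use s in auto)
  also have "((s + 1) / 2 - 1/2) / (1/2) = s" by (simp add: field_simps)
  finally show "conc f g ((s + 1) / 2) = 1/2 + 1/2 * g s" .
qed

lemma linP_conc: fixes F H :: "'n::finite \<Rightarrow> real \<Rightarrow> real"
  assumes L: "linP H" and F: "\<And>k. F k \<in> grpG" and HG: "\<And>k. H k \<in> grpG"
  shows "linP (\<lambda>k. conc (F k) (H k))"
proof (rule linP_transfer[OF L])
  fix c0 and c :: "'n \<Rightarrow> real" and s :: real
  assume Hy: "\<forall>t\<in>{-1..1}. c0 * t + (\<Sum>j\<in>UNIV. c j * conc (F j) (H j) t) = 0" and s: "s \<in> {-1..1}"
  let ?C = "\<Sum>j\<in>UNIV. c j"
  have key: "c0 * x + (\<Sum>j\<in>UNIV. c j * H j x) + c0 + ?C = 0" if x: "x \<in> {-1..1}" for x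
  proof -
    have "c0 * ((x + 1) / 2) + (\<Sum>j\<in>UNIV. c j * conc (F j) (H j) ((x + 1) / 2)) = 0"
      using bspec[OF Hy conc_half(1)[OF F x]] .
    moreover have "(\<Sum>j\<in>UNIV. c j * conc (F j) (H j) ((x + 1) / 2)) = (\<Sum>j\<in>UNIV. (c j + c j * H j x) / 2)"
    proof (rule sum.cong[OF refl])
      fix j show "c j * conc (F j) (H j) ((x + 1) / 2) = (c j + c j * H j x) / 2"
        unfolding conc_half(2)[OF F x, where g="H j"] by (simp add: field_simps)
    qed
    moreover have "(\<Sum>j\<in>UNIV. (c j + c j * H j x) / 2) = (\<Sum>j\<in>UNIV. c j + c j * H j x) / 2"
      by (rule sum_divide_distrib[symmetric])
    moreover have "(\<Sum>j\<in>UNIV. c j + c j * H j x) = ?C + (\<Sum>j\<in>UNIV. c j * H j x)"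
      by (rule sum.distrib)
    ultimately show ?thesis by (simp add: field_simps)
  qed
  have one: "(1::real) \<in> {-1..1}" by simp
  have "(\<Sum>j\<in>UNIV. c j * H j 1) = ?C" using G_p1[OF HG] by simp
  then have "c0 + ?C = 0" using key[OF one] by simp
  then show "c0 * s + (\<Sum>j\<in>UNIV. c j * H j s) = 0" using key[OF s] by simp
qed

lemma linE_conc_id: fixes H :: "'n::finite \<Rightarrow> real \<Rightarrow> real"
  assumes L: "linP H" and HG: "\<And>k. H k \<in> grpG"
  shows "linE (\<lambda>k. conc (\<lambda>t. t) (H k))"
  unfolding linE_def
proof (rule allI, rule impI)
  fix c :: "'n \<Rightarrow> real"
  assume Hy: "\<forall>t\<in>{-1..1}. (\<Sum>j\<in>UNIV. c j * even_part (conc (\<lambda>t. t) (H j)) t) = 0"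
  let ?C = "\<Sum>j\<in>UNIV. c j"
  have "(- ?C) * s + (\<Sum>j\<in>UNIV. c j * H j s) = 0" if s: "s \<in> {-1..1}" for s
  proof -
    have m: "conc (\<lambda>t. t) (H j) (- ((s + 1) / 2)) = - ((s + 1) / 2)" for j
    proof -
      have "conc (\<lambda>t. t) (H j) (- ((s + 1) / 2)) = emb (-1/2) (1/2) (\<lambda>t. t) (- ((s + 1) / 2))"
        by (rule conc_L[OF HG]) (use s in auto)
      also have "\<dots> = - ((s + 1) / 2)" by (rule emb_idlike) simp
      finally show ?thesis .
    qed
    have "(\<Sum>j\<in>UNIV. c j * even_part (conc (\<lambda>t. t) (H j)) ((s + 1) / 2)) = 0"
      using bspec[OF Hy conc_half(1)[OF G_id s]] .
    moreover have "(\<Sum>j\<in>UNIV. c j * even_part (conc (\<lambda>t. t) (H j)) ((s + 1) / 2))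
        = (\<Sum>j\<in>UNIV. (c j * H j s - c j * s) / 4)"
    proof (rule sum.cong[OF refl])
      fix j show "c j * even_part (conc (\<lambda>t. t) (H j)) ((s + 1) / 2) = (c j * H j s - c j * s) / 4"
        unfolding even_part_def conc_half(2)[OF G_id s, where g="H j"] m[of j] by (simp add: field_simps)
    qed
    moreover have "(\<Sum>j\<in>UNIV. (c j * H j s - c j * s) / 4) = (\<Sum>j\<in>UNIV. c j * H j s - c j * s) / 4"
      by (rule sum_divide_distrib[symmetric])
    moreover have "(\<Sum>j\<in>UNIV. c j * H j s - c j * s) = (\<Sum>j\<in>UNIV. c j * H j s) - ?C * s"
      by (simp add: sum_subtractf sum_distrib_right)
    ultimately show ?thesis by (simp add: field_simps)
  qed
  then have "- ?C = 0 \<and> (\<forall>j. c j = 0)" using L unfolding linP_def by blast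
  then show "\<forall>j. c j = 0" by blast
qed

lemma linP_rf: fixes F :: "'n::finite \<Rightarrow> real \<Rightarrow> real"
  assumes L: "linP F" shows "linP (\<lambda>k. rf (F k))"
proof (rule linP_transfer[OF L])
  fix c0 and c :: "'n \<Rightarrow> real" and s :: real
  assume Hy: "\<forall>t\<in>{-1..1}. c0 * t + (\<Sum>j\<in>UNIV. c j * rf (F j) t) = 0" and s: "s \<in> {-1..1}"
  have ms: "-s \<in> {-1..1}" using s by auto
  have "c0 * (-s) + (\<Sum>j\<in>UNIV. c j * rf (F j) (-s)) = 0" using bspec[OF Hy ms] .
  moreover have "(\<Sum>j\<in>UNIV. c j * rf (F j) (-s)) = - (\<Sum>j\<in>UNIV. c j * F j s)"
    by (simp add: rf_def sum_negf)
  ultimately show "c0 * s + (\<Sum>j\<in>UNIV. c j * F j s) = 0" by simp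
qed

lemma linE_rf: fixes F :: "'n::finite \<Rightarrow> real \<Rightarrow> real"
  assumes L: "linE F" shows "linE (\<lambda>k. rf (F k))"
proof (rule linE_transfer[OF L])
  fix c :: "'n \<Rightarrow> real" and s :: real
  assume Hy: "\<forall>t\<in>{-1..1}. (\<Sum>j\<in>UNIV. c j * even_part (rf (F j)) t) = 0" and s: "s \<in> {-1..1}"
  have "(\<Sum>j\<in>UNIV. c j * even_part (rf (F j)) s) = 0" using bspec[OF Hy s] .
  moreover have "(\<Sum>j\<in>UNIV. c j * even_part (rf (F j)) s) = (\<Sum>j\<in>UNIV. - (c j * even_part (F j) s))"
    by (rule sum.cong[OF refl]) (simp add: rf_def even_part_def field_simps)
  moreover have "(\<Sum>j\<in>UNIV. - (c j * even_part (F j) s)) = - (\<Sum>j\<in>UNIV. c j * even_part (F j) s)"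
    by (rule sum_negf)
  ultimately show "(\<Sum>j\<in>UNIV. c j * even_part (F j) s) = 0" by simp
qed

lemma G_intro:
  assumes "continuous_on {-1..1} f" "strict_mono_on {-1..1} f" "f (-1) = -1" "f 1 = 1"
  shows "f \<in> grpG"
proof -
  have "f t \<in> {-1..1}" if t: "t \<in> {-1..1}" for t
  proof -
    have "f (-1) \<le> f t"
      using t strict_mono_onD[OF assms(2), of "-1" t] by (cases "t = -1") auto
    moreover have "f t \<le> f 1"
      using t strict_mono_onD[OF assms(2), of t 1] by (cases "t = 1") auto
    ultimately show ?thesis using assms by simp
  qed
  then show ?thesis using assms unfolding grpG_def by auto
qed

lemma ftc_int: fixes F f :: "real \<Rightarrow> real"
  assumes "\<And>x. (F has_real_derivative f x) (at x)"
  shows "(f has_integral (F 1 - F (-1))) {-1..1}"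
proof (rule fundamental_theorem_of_calculus)
  fix x :: real assume "x \<in> {-1..1}"
  show "(F has_vector_derivative f x) (at x within {-1..1})"
    using has_field_derivative_at_within[OF assms] has_real_derivative_iff_has_vector_derivative by blast
qed simp

lemma G_deriv_pos:
  assumes "\<And>x. (f has_real_derivative f' x) (at x)" "\<And>x. x \<in> {-1..1} \<Longrightarrow> 0 < f' x"
  shows "strict_mono_on {-1..1} f"
proof (rule strict_mono_onI)
  fix x y :: real assume "x \<in> {-1..1}" "y \<in> {-1..1}" "x < y"
  then show "f x < f y"
  proof (intro DERIV_pos_imp_increasing[OF \<open>x < y\<close>])
    fix z assume "x \<le> z" "z \<le> y"
    then have "z \<in> {-1..1}" using \<open>x \<in> {-1..1}\<close> \<open>y \<in> {-1..1}\<close> by auto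
    then show "\<exists>y. (f has_real_derivative y) (at z) \<and> 0 < y" using assms(1)[of z] assms(2)[of z] by blast
  qed
qed

lemma Q_subst:
  assumes f: "f \<in> grpG" and g: "g \<in> grpG" and d: "\<And>x. (g has_real_derivative g' x) (at x)"
  shows "((\<lambda>x. g' x * f x) has_integral Qf f g) {-1..1}"
proof -
  let ?h = "\<lambda>t. f (inv_into {-1..1} g t)"
  have h: "?h \<in> grpG" using G_comp[OF f G_inv_G[OF g]] .
  have "((\<lambda>x. g' x *\<^sub>R ?h (g x)) has_integral (integral {g (-1)..g 1} ?h)) {-1..1}"
  proof (rule has_integral_substitution[where c="-1" and d=1])
    show "g (-1) \<le> g 1" using G_m1[OF g] G_p1[OF g] by simp
    show "g ` {-1..1} \<subseteq> {-1..1}" using G_img[OF g] .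
    show "continuous_on {-1..1} ?h" using G_cont[OF h] .
    show "\<And>x. x \<in> {-1..1} \<Longrightarrow> (g has_real_derivative g' x) (at x within {-1..1})"
      using has_field_derivative_at_within[OF d] by blast
  qed simp
  then have "((\<lambda>x. g' x *\<^sub>R ?h (g x)) has_integral Qf f g) {-1..1}"
    using G_m1[OF g] G_p1[OF g] by (simp add: Qf_def)
  then show ?thesis
    by (subst has_integral_cong[where g="\<lambda>x. g' x *\<^sub>R ?h (g x)"]) (auto simp: G_inv_f[OF g])
qed

lemma odd_pow_less: fixes x y :: real assumes "odd n" "x < y" shows "x ^ n < y ^ n"
proof -
  have n: "0 < n" using assms(1) by (metis even_zero gr0I)
  consider "0 \<le> x" | "y \<le> 0" | "x < 0" "0 < y" by linarith
  then show ?thesis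
  proof cases
    case 1 then show ?thesis using power_strict_mono[OF assms(2) 1 n] by simp
  next
    case 2
    then have "(-y) ^ n < (-x) ^ n" using power_strict_mono[of "-y" "-x" n] assms n by simp
    then show ?thesis using assms(1) by (simp add: power_minus_odd)
  next
    case 3
    have "0 < (-x) ^ n" using 3 by simp
    then have "x ^ n < 0" using power_minus_odd[OF assms(1), of x] by simp
    moreover have "0 < y ^ n" using 3 by simp
    ultimately show ?thesis by linarith
  qed
qed

lemma mono_G: assumes "odd n" shows "(\<lambda>t::real. t ^ n) \<in> grpG"
proof (rule G_intro)
  show "continuous_on {-1..1} (\<lambda>t::real. t ^ n)" by (intro continuous_intros)
  show "strict_mono_on {-1..1} (\<lambda>t::real. t ^ n)" by (rule strict_mono_onI) (use odd_pow_less[OF assms] in auto)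
  show "(-1::real) ^ n = -1" using assms by simp
qed simp

lemma mono_int: assumes "odd n" shows "((\<lambda>t::real. t ^ n) has_integral 0) {-1..1}"
proof -
  have "((\<lambda>t::real. t ^ n) has_integral ((\<lambda>x. x ^ Suc n / real (Suc n)) 1 - (\<lambda>x. x ^ Suc n / real (Suc n)) (-1))) {-1..1}"
  proof (rule ftc_int)
    fix x :: real
    have "((\<lambda>x. x ^ Suc n) has_real_derivative real (Suc n) * x ^ n) (at x)"
      using DERIV_pow[of "Suc n" x] by simp
    then have "((\<lambda>x. x ^ Suc n / real (Suc n)) has_real_derivative real (Suc n) * x ^ n / real (Suc n)) (at x)"
      by (rule DERIV_cdivide)
    then show "((\<lambda>x. x ^ Suc n / real (Suc n)) has_real_derivative x ^ n) (at x)"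
      by simp
  qed
  moreover have "even (Suc n)" using assms by simp
  ultimately show ?thesis by simp
qed

lemma mono_G0: assumes "odd n" shows "(\<lambda>t::real. t ^ n) \<in> grpG0"
  using mono_G[OF assms] mono_int[OF assms] unfolding grpG0_def by (auto intro: integral_unique)

lemma exists_LIN: "\<exists>F::'n::finite \<Rightarrow> real \<Rightarrow> real. F \<in> LIN"
proof -
  obtain e :: "'n \<Rightarrow> nat" and N where e: "inj_on e UNIV"
    using finite_imp_inj_to_nat_seg[of "UNIV::'n set"] by auto
  let ?d = "\<lambda>j. 2 * e j + 3"
  let ?F = "\<lambda>j. \<lambda>t::real. t ^ ?d j"
  have G0: "\<forall>j. ?F j \<in> grpG0" by (auto intro!: mono_G0)
  have "linP ?F" unfolding linP_def
  proof (intro allI impI)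
    fix c0 and c :: "'n \<Rightarrow> real"
    assume H: "\<forall>t\<in>{-1..1}. c0 * t + (\<Sum>j\<in>UNIV. c j * ?F j t) = 0"
    let ?p = "monom c0 1 + (\<Sum>j\<in>UNIV. monom (c j) (?d j))"
    have ev: "poly ?p t = c0 * t + (\<Sum>j\<in>UNIV. c j * ?F j t)" for t
      by (simp add: poly_monom poly_sum)
    have "{-1..1} \<subseteq> {t. poly ?p t = 0}" using H ev by auto
    moreover have "\<not> finite {-1..(1::real)}" by (rule infinite_Icc) simp
    ultimately have "infinite {t. poly ?p t = 0}"
      using finite_subset by blast
    then have p0: "?p = 0" using poly_roots_finite by blast
    have cf: "coeff ?p k = (if k = 1 then c0 else 0) + (\<Sum>j\<in>UNIV. if ?d j = k then c j else 0)" for k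
      by (simp add: coeff_sum coeff_monom)
    have z: "coeff ?p k = 0" for k by (subst p0) simp
    have "coeff ?p 1 = c0" using cf[of 1] by simp
    then have c0: "c0 = 0" using z[of 1] by simp
    have "c i = 0" for i
    proof -
      have "(\<Sum>j\<in>UNIV. if ?d j = ?d i then c j else 0) = (\<Sum>j\<in>UNIV. if j = i then c j else 0)"
        by (rule sum.cong[OF refl]) (use e in \<open>auto simp: inj_on_def\<close>)
      then have "coeff ?p (?d i) = c i" using cf[of "?d i"] by simp
      then show ?thesis using z[of "?d i"] by simp
    qed
    then show "c0 = 0 \<and> (\<forall>j. c j = 0)" using c0 by simp
  qed
  then have "?F \<in> LIN" using G0 LIN_iff by blast
  then show ?thesis by blast
qed

subsection \<open>The pair block\<close>

definition phi :: "real \<Rightarrow> real" where "phi t = t + (t - t^3)/4"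
definition psi :: "real \<Rightarrow> real" where "psi t = t + (1 - 6*t^2 + 5*t^4)/64"
definition phi' :: "real \<Rightarrow> real" where "phi' t = 5/4 - 3/4 * t^2"
definition psi' :: "real \<Rightarrow> real" where "psi' t = 1 + 5/16 * t^3 - 3/16 * t"

lemma phi_d: "(phi has_real_derivative phi' x) (at x)"
  unfolding phi_def[abs_def] phi'_def
  by (auto intro!: derivative_eq_intros simp: field_simps eval_nat_numeral)

lemma psi_d: "(psi has_real_derivative psi' x) (at x)"
  unfolding psi_def[abs_def] psi'_def
  by (auto intro!: derivative_eq_intros simp: field_simps eval_nat_numeral)

lemma phi'_pos: "x \<in> {-1..1} \<Longrightarrow> 0 < phi' x"
proof -
  assume "x \<in> {-1..1}"
  then have "x^2 \<le> 1" by (auto simp: abs_square_le_1)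
  then show ?thesis unfolding phi'_def by linarith
qed

lemma psi'_pos: "x \<in> {-1..1} \<Longrightarrow> 0 < psi' x"
proof -
  assume x: "x \<in> {-1..1}"
  then have "\<bar>x^3\<bar> \<le> 1" by (auto simp: power_abs power_le_one)
  then have "-1 \<le> x^3" by linarith
  then show ?thesis using x unfolding psi'_def by auto
qed

lemma phi_G: "phi \<in> grpG"
proof (rule G_intro)
  show "continuous_on {-1..1} phi" unfolding phi_def[abs_def] by (intro continuous_intros) auto
  show "strict_mono_on {-1..1} phi" by (rule G_deriv_pos[OF phi_d phi'_pos])
qed (simp_all add: phi_def)

lemma psi_G: "psi \<in> grpG"
proof (rule G_intro)
  show "continuous_on {-1..1} psi" unfolding psi_def[abs_def] by (intro continuous_intros) auto
  show "strict_mono_on {-1..1} psi" by (rule G_deriv_pos[OF psi_d psi'_pos])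
qed (simp_all add: psi_def)

lemma phi_int: "(phi has_integral 0) {-1..1}"
proof -
  have "(phi has_integral ((\<lambda>x. 5/8*x^2 - 1/16*x^4) 1 - (\<lambda>x. 5/8*x^2 - 1/16*x^4) (-1))) {-1..1}"
    by (rule ftc_int) (auto intro!: derivative_eq_intros simp: phi_def field_simps eval_nat_numeral)
  then show ?thesis by simp
qed

lemma psi_int: "(psi has_integral 0) {-1..1}"
proof -
  have "(psi has_integral ((\<lambda>x. x/64 + x^2/2 - x^3/32 + x^5/64) 1 - (\<lambda>x. x/64 + x^2/2 - x^3/32 + x^5/64) (-1))) {-1..1}"
    by (rule ftc_int) (auto intro!: derivative_eq_intros simp: psi_def field_simps eval_nat_numeral)
  then show ?thesis by simp
qed

lemma phi_G0: "phi \<in> grpG0" using phi_G phi_int unfolding grpG0_def by (auto intro: integral_unique)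
lemma psi_G0: "psi \<in> grpG0" using psi_G psi_int unfolding grpG0_def by (auto intro: integral_unique)

lemma id_G0: "(\<lambda>t. t) \<in> grpG0" using G_id id_int0 unfolding grpG0_def by (auto intro: integral_unique)

lemma Q_phi_id: "Qf phi (\<lambda>t. t) = 0" using phi_int by (simp add: Qf_id2 integral_unique)
lemma Q_psi_id: "Qf psi (\<lambda>t. t) = 0" using psi_int by (simp add: Qf_id2 integral_unique)

lemma Q_id_phi: "Qf (\<lambda>t. t) phi = 0"
proof -
  have a: "((\<lambda>x. phi' x * x) has_integral Qf (\<lambda>t. t) phi) {-1..1}" by (rule Q_subst[OF G_id phi_G phi_d])
  have "((\<lambda>x. phi' x * x) has_integral ((\<lambda>x. 5/8*x^2 - 3/16*x^4) 1 - (\<lambda>x. 5/8*x^2 - 3/16*x^4) (-1))) {-1..1}"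
    by (rule ftc_int) (auto intro!: derivative_eq_intros simp: phi'_def field_simps eval_nat_numeral)
  then show ?thesis using has_integral_unique[OF a] by simp
qed

lemma Q_id_psi: "Qf (\<lambda>t. t) psi = 0"
proof -
  have a: "((\<lambda>x. psi' x * x) has_integral Qf (\<lambda>t. t) psi) {-1..1}" by (rule Q_subst[OF G_id psi_G psi_d])
  have "((\<lambda>x. psi' x * x) has_integral ((\<lambda>x. x^2/2 - x^3/16 + x^5/16) 1 - (\<lambda>x. x^2/2 - x^3/16 + x^5/16) (-1))) {-1..1}"
    by (rule ftc_int) (auto intro!: derivative_eq_intros simp: psi'_def field_simps eval_nat_numeral)
  then show ?thesis using has_integral_unique[OF a] by simp
qed

lemma Q_psi_phi: "Qf psi phi = 1/280"
proof -
  have a: "((\<lambda>x. phi' x * psi x) has_integral Qf psi phi) {-1..1}" by (rule Q_subst[OF psi_G phi_G phi_d])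
  let ?F = "\<lambda>x::real. 5/256*x + 5/8*x^2 - 11/256*x^3 - 3/16*x^4 + 43/1280*x^5 - 15/1792*x^7"
  have "((\<lambda>x. phi' x * psi x) has_integral (?F 1 - ?F (-1))) {-1..1}"
    by (rule ftc_int) (auto intro!: derivative_eq_intros simp: phi'_def psi_def field_simps eval_nat_numeral)
  then show ?thesis using has_integral_unique[OF a] by simp
qed

lemma Q_phi_psi: "Qf phi psi = -1/280"
proof -
  have a: "((\<lambda>x. psi' x * phi x) has_integral Qf phi psi) {-1..1}" by (rule Q_subst[OF phi_G psi_G psi_d])
  let ?F = "\<lambda>x::real. 5/8*x^2 - 5/64*x^3 - 1/16*x^4 + 7/80*x^5 - 5/448*x^7"
  have "((\<lambda>x. psi' x * phi x) has_integral (?F 1 - ?F (-1))) {-1..1}"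
    by (rule ftc_int) (auto intro!: derivative_eq_intros simp: psi'_def phi_def field_simps eval_nat_numeral)
  then show ?thesis using has_integral_unique[OF a] by simp
qed

definition PB :: "'n \<Rightarrow> 'n \<Rightarrow> 'n \<Rightarrow> real \<Rightarrow> real" where
  "PB p q = (\<lambda>k. if k = p then phi else if k = q then psi else (\<lambda>t. t))"

definition Bm :: "'n::finite \<Rightarrow> 'n \<Rightarrow> real^'n^'n" where
  "Bm p q = (\<chi> i j. if i = p \<and> j = q then 1 else if i = q \<and> j = p then -1 else 0)"

lemma PB_G0: "PB p q k \<in> grpG0"
  by (auto simp: PB_def phi_G0 psi_G0 id_G0)

lemma PB_Q: fixes p q :: "'n::finite" assumes "p \<noteq> q"
  shows "Qmat (PB p q) = (1/280) *\<^sub>R Bm p q"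
  using assms
  by (auto simp: vec_eq_iff Qmat_def Bm_def PB_def Qf_self phi_G psi_G G_id Q_phi_id Q_psi_id
      Q_id_phi Q_id_psi Q_psi_phi Q_phi_psi Qf_id_id)

definition Fam0 :: "('n::finite \<Rightarrow> real \<Rightarrow> real) set" where
  "Fam0 = {F. \<forall>j. F j \<in> grpG0}"

lemma LIN_Fam0: "LIN \<subseteq> Fam0" using LIN_iff Fam0_def by blast
lemma LINplus_Fam0: "LINplus \<subseteq> Fam0" using LINplus_iff Fam0_def by blast

lemma sqrt_ok: assumes "0 < s" "s \<le> 1" shows "okp 0 (sqrt s)" "0 < sqrt s" "sqrt s \<le> 1" "(sqrt s)\<^sup>2 = s"
  using assms by (auto simp: okp_def)

lemma emb_fam: "F \<in> Fam0 \<Longrightarrow> okp m r \<Longrightarrow> (\<lambda>k. emb m r (F k)) \<in> Fam0"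
  by (simp add: Fam0_def emb_G0)

lemma Fam0_G: "F \<in> Fam0 \<Longrightarrow> F k \<in> grpG"
  by (simp add: Fam0_def G0_G)

lemma K0_scale: fixes X :: "real^'n::finite^'n"
  assumes "X \<in> Qmat ` Fam0" "0 < s" "s \<le> 1" shows "s *\<^sub>R X \<in> Qmat ` Fam0"
proof -
  obtain F where F: "F \<in> Fam0" "X = Qmat F" using assms(1) by blast
  have "Qmat (\<lambda>k. emb 0 (sqrt s) (F k)) = s *\<^sub>R X"
    using Qmat_emb[OF Fam0_G[OF F(1)] sqrt_ok(1)[OF assms(2,3)]] sqrt_ok(4)[OF assms(2,3)] F(2) by simp
  then show ?thesis using emb_fam[OF F(1) sqrt_ok(1)[OF assms(2,3)]] by (metis image_eqI)
qed

lemma K_scale: fixes X :: "real^'n::finite^'n"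
  assumes "X \<in> Qmat ` LIN" "0 < s" "s \<le> 1" shows "s *\<^sub>R X \<in> Qmat ` LIN"
proof -
  obtain F where F: "F \<in> LIN" "X = Qmat F" using assms(1) by blast
  have F0: "F \<in> Fam0" using F(1) LIN_Fam0 by blast
  have "Qmat (\<lambda>k. emb 0 (sqrt s) (F k)) = s *\<^sub>R X"
    using Qmat_emb[OF Fam0_G[OF F0] sqrt_ok(1)[OF assms(2,3)]] sqrt_ok(4)[OF assms(2,3)] F(2) by simp
  moreover have "(\<lambda>k. emb 0 (sqrt s) (F k)) \<in> LIN"
  proof -
    have "linP F" using F(1) LIN_iff by blast
    then have "linP (\<lambda>k. emb 0 (sqrt s) (F k))" by (rule linP_emb0[OF _ sqrt_ok(2,3)[OF assms(2,3)]])
    moreover have "\<forall>j. emb 0 (sqrt s) (F j) \<in> grpG0"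
      using emb_fam[OF F0 sqrt_ok(1)[OF assms(2,3)]] by (simp add: Fam0_def)
    ultimately show ?thesis using LIN_iff by blast
  qed
  ultimately show ?thesis by (metis image_eqI)
qed

lemma Kp_scale: fixes X :: "real^'n::finite^'n"
  assumes "X \<in> Qmat ` LINplus" "0 < s" "s \<le> 1" shows "s *\<^sub>R X \<in> Qmat ` LINplus"
proof -
  obtain F where F: "F \<in> LINplus" "X = Qmat F" using assms(1) by blast
  have F0: "F \<in> Fam0" using F(1) LINplus_Fam0 by blast
  have "Qmat (\<lambda>k. emb 0 (sqrt s) (F k)) = s *\<^sub>R X"
    using Qmat_emb[OF Fam0_G[OF F0] sqrt_ok(1)[OF assms(2,3)]] sqrt_ok(4)[OF assms(2,3)] F(2) by simp
  moreover have "(\<lambda>k. emb 0 (sqrt s) (F k)) \<in> LINplus"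
  proof -
    have "linE F" using F(1) LINplus_iff by blast
    then have "linE (\<lambda>k. emb 0 (sqrt s) (F k))" by (rule linE_emb0[OF _ sqrt_ok(2,3)[OF assms(2,3)]])
    moreover have "\<forall>j. emb 0 (sqrt s) (F j) \<in> grpG0"
      using emb_fam[OF F0 sqrt_ok(1)[OF assms(2,3)]] by (simp add: Fam0_def)
    ultimately show ?thesis using LINplus_iff by blast
  qed
  ultimately show ?thesis by (metis image_eqI)
qed

lemma rf_fam: "F \<in> Fam0 \<Longrightarrow> (\<lambda>k. rf (F k)) \<in> Fam0"
  by (simp add: Fam0_def rf_G0)

lemma K_neg: fixes X :: "real^'n::finite^'n"
  assumes "X \<in> Qmat ` LIN" shows "- X \<in> Qmat ` LIN"
proof -
  obtain F where F: "F \<in> LIN" "X = Qmat F" using assms(1) by blast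
  have F0: "F \<in> Fam0" using F(1) LIN_Fam0 by blast
  have "Qmat (\<lambda>k. rf (F k)) = - X" using Qmat_rf[OF Fam0_G[OF F0]] F(2) by simp
  moreover have "(\<lambda>k. rf (F k)) \<in> LIN"
  proof -
    have "linP F" using F(1) LIN_iff by blast
    then have "linP (\<lambda>k. rf (F k))" by (rule linP_rf)
    moreover have "\<forall>j. rf (F j) \<in> grpG0" using rf_fam[OF F0] by (simp add: Fam0_def)
    ultimately show ?thesis using LIN_iff by blast
  qed
  ultimately show ?thesis by (metis image_eqI)
qed

lemma Kp_neg: fixes X :: "real^'n::finite^'n"
  assumes "X \<in> Qmat ` LINplus" shows "- X \<in> Qmat ` LINplus"
proof -
  obtain F where F: "F \<in> LINplus" "X = Qmat F" using assms(1) by blast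
  have F0: "F \<in> Fam0" using F(1) LINplus_Fam0 by blast
  have "Qmat (\<lambda>k. rf (F k)) = - X" using Qmat_rf[OF Fam0_G[OF F0]] F(2) by simp
  moreover have "(\<lambda>k. rf (F k)) \<in> LINplus"
  proof -
    have "linE F" using F(1) LINplus_iff by blast
    then have "linE (\<lambda>k. rf (F k))" by (rule linE_rf)
    moreover have "\<forall>j. rf (F j) \<in> grpG0" using rf_fam[OF F0] by (simp add: Fam0_def)
    ultimately show ?thesis using LINplus_iff by blast
  qed
  ultimately show ?thesis by (metis image_eqI)
qed

lemma K_conc: fixes X Y :: "real^'n::finite^'n"
  assumes "X \<in> Qmat ` Fam0" "Y \<in> Qmat ` LIN" shows "(1/4) *\<^sub>R (X + Y) \<in> Qmat ` LIN"
proof -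
  obtain F where F: "F \<in> Fam0" "X = Qmat F" using assms(1) by blast
  obtain H where H: "H \<in> LIN" "Y = Qmat H" using assms(2) by blast
  have H0: "H \<in> Fam0" using H(1) LIN_Fam0 by blast
  have "Qmat (\<lambda>k. conc (F k) (H k)) = (1/4) *\<^sub>R (X + Y)"
    using Qmat_conc[OF Fam0_G[OF F(1)] Fam0_G[OF H0]] F(2) H(2) by simp
  moreover have "(\<lambda>k. conc (F k) (H k)) \<in> LIN"
  proof -
    have "linP H" using H(1) LIN_iff by blast
    then have "linP (\<lambda>k. conc (F k) (H k))" by (rule linP_conc[OF _ Fam0_G[OF F(1)] Fam0_G[OF H0]])
    moreover have "\<forall>j. conc (F j) (H j) \<in> grpG0" using F(1) H0 by (simp add: Fam0_def conc_G0)
    ultimately show ?thesis using LIN_iff by blast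
  qed
  ultimately show ?thesis by (metis image_eqI)
qed

lemma Qmat_idfam: "Qmat (\<lambda>k::'n::finite. \<lambda>t::real. t) = 0"
  by (simp add: Qmat_def vec_eq_iff Qf_id_id)

lemma Kp_from_K: fixes Y :: "real^'n::finite^'n"
  assumes "Y \<in> Qmat ` LIN" shows "(1/4) *\<^sub>R Y \<in> Qmat ` LINplus"
proof -
  obtain H where H: "H \<in> LIN" "Y = Qmat H" using assms by blast
  have H0: "H \<in> Fam0" using H(1) LIN_Fam0 by blast
  have "Qmat (\<lambda>k. conc (\<lambda>t. t) (H k)) = (1/4) *\<^sub>R Y"
    using Qmat_conc[of "\<lambda>k t. t" H, OF G_id Fam0_G[OF H0]] H(2) Qmat_idfam by simp
  moreover have "(\<lambda>k. conc (\<lambda>t. t) (H k)) \<in> LINplus"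
  proof -
    have "linP H" using H(1) LIN_iff by blast
    then have "linE (\<lambda>k. conc (\<lambda>t. t) (H k))" by (rule linE_conc_id[OF _ Fam0_G[OF H0]])
    moreover have "\<forall>j. conc (\<lambda>t. t) (H j) \<in> grpG0" using H0 by (simp add: Fam0_def conc_G0 id_G0)
    ultimately show ?thesis using LINplus_iff by blast
  qed
  ultimately show ?thesis by (metis image_eqI)
qed

lemma zero_K0: "(0::real^'n::finite^'n) \<in> Qmat ` Fam0"
proof -
  have "(\<lambda>k::'n. \<lambda>t::real. t) \<in> Fam0" by (simp add: Fam0_def id_G0)
  then show ?thesis using Qmat_idfam by (metis image_eqI)
qed

lemma zero_K: "(0::real^'n::finite^'n) \<in> Qmat ` LIN"
proof -
  obtain F :: "'n \<Rightarrow> real \<Rightarrow> real" where F: "F \<in> LIN" using exists_LIN by blast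
  have X: "Qmat F \<in> Qmat ` LIN" using F by blast
  have "Qmat F \<in> Qmat ` Fam0" using F LIN_Fam0 by blast
  from K_conc[OF this K_neg[OF X]] show ?thesis by simp
qed

lemma zero_Kp: "(0::real^'n::finite^'n) \<in> Qmat ` LINplus"
  using Kp_from_K[OF zero_K] by simp

lemma cone: fixes v :: "'i \<Rightarrow> real^'n::finite^'n"
  assumes "finite I" "\<forall>i\<in>I. v i \<in> Qmat ` Fam0"
  shows "\<exists>c>0. c \<le> 1 \<and> c *\<^sub>R (\<Sum>i\<in>I. v i) \<in> Qmat ` LIN"
  using assms
proof (induction I rule: finite_induct)
  case empty
  then show ?case using zero_K by (intro exI[of _ 1]) simp
next
  case (insert x F)
  have IHp: "\<forall>i\<in>F. v i \<in> Qmat ` Fam0" using insert.prems by simp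
  obtain c where c: "0 < c" "c \<le> 1" "c *\<^sub>R (\<Sum>i\<in>F. v i) \<in> Qmat ` LIN"
    using insert.IH[OF IHp] by blast
  have vx: "v x \<in> Qmat ` Fam0" using insert.prems by simp
  have "c *\<^sub>R v x \<in> Qmat ` Fam0" using K0_scale[OF vx c(1,2)] .
  from K_conc[OF this c(3)]
  have m: "(1/4) *\<^sub>R (c *\<^sub>R v x + c *\<^sub>R (\<Sum>i\<in>F. v i)) \<in> Qmat ` LIN" .
  have s: "(\<Sum>i\<in>insert x F. v i) = v x + (\<Sum>i\<in>F. v i)" using insert.hyps by simp
  have "(1/4) *\<^sub>R (c *\<^sub>R v x + c *\<^sub>R (\<Sum>i\<in>F. v i)) = (c/4) *\<^sub>R (\<Sum>i\<in>insert x F. v i)"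
    unfolding s by (simp add: scaleR_add_right)
  with m have "(c/4) *\<^sub>R (\<Sum>i\<in>insert x F. v i) \<in> Qmat ` LIN" by simp
  moreover have "0 < c/4" "c/4 \<le> 1" using c by linarith+
  ultimately show ?case by blast
qed

section \<open>Antisymmetric matrices and star-shapedness\<close>

lemma antisymD: "A \<in> antisym_mats \<Longrightarrow> A $ i $ j = - (A $ j $ i)"
proof -
  assume "A \<in> antisym_mats"
  then have "transpose A $ j $ i = (- A) $ j $ i" by (simp add: antisym_mats_def)
  then show ?thesis by (simp add: transpose_def)
qed

lemma sum_comp2: "(\<Sum>x\<in>S. (c x) *\<^sub>R (B x :: real^'n::finite^'m::finite)) $ i $ j = (\<Sum>x\<in>S. c x * (B x $ i $ j))"
  by simp

lemma term_eq: fixes w :: "'n::finite \<times> 'n \<Rightarrow> real"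
  assumes d: "\<And>k. w (k, k) = 0"
  shows "w (p, q) * (Bm p q $ i $ j) = (if (p, q) = (i, j) then w (i, j) else 0) - (if (p, q) = (j, i) then w (j, i) else 0)"
  unfolding Bm_def by (cases "p = i"; cases "q = j"; cases "p = j"; cases "q = i") (auto simp: d)

lemma decomp: fixes A :: "real^'n::finite^'n"
  assumes A: "A \<in> antisym_mats"
  shows "(\<Sum>pq\<in>UNIV. max (A $ fst pq $ snd pq) 0 *\<^sub>R Bm (fst pq) (snd pq)) = A"
proof -
  define w where "w = (\<lambda>pq::'n \<times> 'n. max (A $ fst pq $ snd pq) 0)"
  have d: "w (k, k) = 0" for k using antisymD[OF A, of k k] by (simp add: w_def)
  have comp: "(\<Sum>pq\<in>UNIV. w pq *\<^sub>R Bm (fst pq) (snd pq)) $ i $ j = A $ i $ j" for i j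
  proof -
    have "(\<Sum>pq\<in>UNIV. w pq *\<^sub>R Bm (fst pq) (snd pq)) $ i $ j
        = (\<Sum>pq\<in>UNIV. w pq * (Bm (fst pq) (snd pq) $ i $ j))"
      by (rule sum_comp2)
    also have "\<dots> = (\<Sum>pq\<in>UNIV. (if pq = (i, j) then w (i, j) else 0) - (if pq = (j, i) then w (j, i) else 0))"
    proof (rule sum.cong[OF refl])
      fix pq :: "'n \<times> 'n"
      obtain p q where pq: "pq = (p, q)" by fastforce
      show "w pq * (Bm (fst pq) (snd pq) $ i $ j)
          = (if pq = (i, j) then w (i, j) else 0) - (if pq = (j, i) then w (j, i) else 0)"
        unfolding pq fst_conv snd_conv by (rule term_eq[where w=w]) (rule d)
    qed
    also have "\<dots> = (\<Sum>pq\<in>UNIV. if pq = (i, j) then w (i, j) else 0) - (\<Sum>pq\<in>UNIV. if pq = (j, i) then w (j, i) else 0)"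
      by (rule sum_subtractf)
    also have "\<dots> = w (i, j) - w (j, i)"
      by simp
    also have "\<dots> = A $ i $ j" using antisymD[OF A, of j i] by (simp add: w_def max_def)
    finally show ?thesis .
  qed
  have "(\<Sum>pq\<in>UNIV. w pq *\<^sub>R Bm (fst pq) (snd pq)) = A"
  proof (rule vec_eq_iff[THEN iffD2], intro allI)
    fix i show "(\<Sum>pq\<in>UNIV. w pq *\<^sub>R Bm (fst pq) (snd pq)) $ i = A $ i"
      by (rule vec_eq_iff[THEN iffD2], intro allI, rule comp)
  qed
  then show ?thesis unfolding w_def .
qed

lemma antisym_cone: fixes A :: "real^'n::finite^'n"
  assumes A: "A \<in> antisym_mats"
  shows "\<exists>e>0. e *\<^sub>R A \<in> Qmat ` LIN"
proof -
  let ?w = "\<lambda>pq::'n \<times> 'n. max (A $ fst pq $ snd pq) 0"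
  define M where "M = 1 + (\<Sum>pq\<in>UNIV. ?w pq)"
  have wM: "?w pq \<le> M" for pq
  proof -
    have "?w pq \<le> (\<Sum>pq\<in>UNIV. ?w pq)" by (rule member_le_sum) auto
    then show ?thesis unfolding M_def by linarith
  qed
  have "0 \<le> (\<Sum>pq\<in>UNIV. ?w pq)" by (rule sum_nonneg) simp
  then have M0: "0 < M" unfolding M_def by linarith
  let ?v = "\<lambda>pq. (?w pq / M) *\<^sub>R ((1/280) *\<^sub>R Bm (fst pq) (snd pq))"
  have v: "\<forall>pq\<in>UNIV. ?v pq \<in> Qmat ` Fam0"
  proof
    fix pq :: "'n \<times> 'n"
    obtain p q where pq: "pq = (p, q)" by fastforce
    show "?v pq \<in> Qmat ` Fam0"
    proof (cases "?w pq = 0")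
      case True then show ?thesis using zero_K0 by simp
    next
      case False
      have "0 \<le> ?w pq" by simp
      then have pos: "0 < ?w pq" using False by linarith
      have "p \<noteq> q"
      proof
        assume "p = q"
        then have "A $ p $ q = 0" using antisymD[OF A, of p p] by simp
        then show False using False pq by simp
      qed
      have "PB p q \<in> Fam0" by (simp add: Fam0_def PB_G0)
      then have mem: "(1/280) *\<^sub>R Bm p q \<in> Qmat ` Fam0" using PB_Q[OF \<open>p \<noteq> q\<close>] by (metis image_eqI)
      have p1: "0 < ?w pq / M" using pos M0 by simp
      have p2: "?w pq / M \<le> 1" using M0 wM[of pq] by simp
      have "(?w pq / M) *\<^sub>R ((1/280) *\<^sub>R Bm p q) \<in> Qmat ` Fam0" by (rule K0_scale[OF mem p1 p2])
      then show ?thesis unfolding pq by simp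
    qed
  qed
  obtain c where c: "0 < c" "c *\<^sub>R (\<Sum>pq\<in>UNIV. ?v pq) \<in> Qmat ` LIN"
    using cone[OF _ v] by auto
  have "(\<Sum>pq\<in>UNIV. ?v pq) = (1 / (280 * M)) *\<^sub>R (\<Sum>pq\<in>UNIV. ?w pq *\<^sub>R Bm (fst pq) (snd pq))"
    by (simp add: scaleR_sum_right mult.commute)
  also have "\<dots> = (1 / (280 * M)) *\<^sub>R A" using decomp[OF A] by simp
  finally have "(c / (280 * M)) *\<^sub>R A \<in> Qmat ` LIN" using c(2) by simp
  moreover have "0 < c / (280 * M)" using c(1) M0 by simp
  ultimately show ?thesis by blast
qed

lemma star_abs: fixes C :: "(real^'n::finite^'n) set"
  assumes z: "0 \<in> C" and sc: "\<And>X s. X \<in> C \<Longrightarrow> 0 < s \<Longrightarrow> s \<le> 1 \<Longrightarrow> s *\<^sub>R X \<in> C"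
    and ng: "\<And>X. X \<in> C \<Longrightarrow> - X \<in> C"
    and cn: "\<And>A. A \<in> antisym_mats \<Longrightarrow> \<exists>e>0. e *\<^sub>R A \<in> C"
  shows "star_shaped0 antisym_mats C"
  unfolding star_shaped0_def
proof (intro ballI impI conjI)
  fix v :: "real^'n^'n" assume v: "v \<in> antisym_mats" "v \<noteq> 0"
  let ?S = "{x::real. x *\<^sub>R v \<in> C}"
  obtain e where e: "0 < e" "e *\<^sub>R v \<in> C" using cn[OF v(1)] by blast
  have pos: "x *\<^sub>R v \<in> C" if "0 < x" "x \<le> b" "b *\<^sub>R v \<in> C" for x b
  proof -
    have b0: "0 < b" using that by linarith
    have "(x / b) *\<^sub>R (b *\<^sub>R v) \<in> C" by (rule sc[OF that(3)]) (use that b0 in \<open>auto simp: divide_le_eq_1\<close>)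
    then show ?thesis using b0 by simp
  qed
  have neg: "x *\<^sub>R v \<in> C" if "x < 0" "a \<le> x" "a *\<^sub>R v \<in> C" for x a
  proof -
    have a0: "a < 0" using that by linarith
    have "(x / a) *\<^sub>R (a *\<^sub>R v) \<in> C" by (rule sc[OF that(3)]) (use that a0 in \<open>auto simp: divide_le_eq_1 divide_pos_neg zero_less_divide_iff\<close>)
    then show ?thesis using a0 by simp
  qed
  show "is_interval ?S"
    unfolding is_interval_1
  proof (intro ballI allI impI)
    fix a b x assume a: "a \<in> ?S" and b: "b \<in> ?S" and x: "a \<le> x \<and> x \<le> b"
    consider "x = 0" | "0 < x" | "x < 0" by linarith
    then show "x \<in> ?S"
    proof cases
      case 1 then show ?thesis using z by simp
    next
      case 2 then show ?thesis using pos[of x b] b x by simp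
    next
      case 3 then show ?thesis using neg[of x a] a x by simp
    qed
  qed
  show "0 \<in> interior ?S"
    unfolding mem_interior
  proof (intro exI conjI)
    show "0 < e" by (rule e(1))
    show "ball 0 e \<subseteq> ?S"
    proof
      fix x :: real assume "x \<in> ball 0 e"
      then have x: "\<bar>x\<bar> < e" by (simp add: dist_real_def)
      consider "x = 0" | "0 < x" | "x < 0" by linarith
      then show "x \<in> ?S"
      proof cases
        case 1 then show ?thesis using z by simp
      next
        case 2 then show ?thesis using pos[of x e] e x by simp
      next
        case 3
        then have "(- x) *\<^sub>R v \<in> C" using pos[of "-x" e] e x by simp
        from ng[OF this] show ?thesis by simp
      qed
    qed
  qed
qed

theorem theorem4p14:
  shows "Qmat ` LINplus \<subseteq> Qmat ` (LIN :: ('n::finite \<Rightarrow> real \<Rightarrow> real) set)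
         \<and> star_shaped0 (antisym_mats :: (real^'n^'n) set) (Qmat ` (LINplus :: ('n \<Rightarrow> real \<Rightarrow> real) set))
         \<and> star_shaped0 (antisym_mats :: (real^'n^'n) set) (Qmat ` (LIN :: ('n \<Rightarrow> real \<Rightarrow> real) set))"
proof (intro conjI)
  show "Qmat ` LINplus \<subseteq> Qmat ` (LIN :: ('n::finite \<Rightarrow> real \<Rightarrow> real) set)"
    using LINplus_sub by (rule image_mono)
  show "star_shaped0 (antisym_mats :: (real^'n^'n) set) (Qmat ` (LIN :: ('n \<Rightarrow> real \<Rightarrow> real) set))"
    by (rule star_abs[OF zero_K K_scale K_neg antisym_cone])
  show "star_shaped0 (antisym_mats :: (real^'n^'n) set) (Qmat ` (LINplus :: ('n \<Rightarrow> real \<Rightarrow> real) set))"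
  proof (rule star_abs[OF zero_Kp Kp_scale Kp_neg])
    fix A :: "real^'n^'n" assume "A \<in> antisym_mats"
    then obtain e where e: "0 < e" "e *\<^sub>R A \<in> Qmat ` LIN" using antisym_cone by blast
    have "(e / 4) *\<^sub>R A \<in> Qmat ` LINplus" using Kp_from_K[OF e(2)] by simp
    moreover have "0 < e / 4" using e(1) by simp
    ultimately show "\<exists>e>0. e *\<^sub>R A \<in> Qmat ` LINplus" by blast
  qed
qed

end
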